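(* Assume $\max_{e\in\mathcal{E}_h^B}h_e^{-1}\delta_e\le c_\delta<1$ with $c_\delta$ sufficiently small. Then there is a constant $C$ independent of $h$ such that for all $\mathbf{v}\in\mathbf{V}_h$, \[ \sum_{e\in\mathcal{E}_h^B}h_e^{-1}\|S_h\mathbf{v}-\mathbf{v}\|_{L^2(e)}^2\le C c_\delta\|\nabla\mathbf{v}\|_{L^2(\Omega_h)}^2,\qquad \sum_{e\in\mathcal{E}_h^B}h_e^{-1}\|S_h\mathbf{v}\|_{L^2(e)}^2\le C\|\mathbf{v}\|_{1,h}^2 . \] In particular, the norms $\|\cdot\|_h$, $\|\cdot\|_{1,h}$ and $|||\cdot|||_h$ are equivalent on $\mathbf{V}_h$ with equivalence constants independent of $h$.
   Context: $\Omega\subset\mathbb{R}^2$ is a bounded domain with smooth boundary. $S\supset\Omega$ is a polygon and $\mathcal{S}_h$ is a quasi-uniform, shape-regular triangulation of $S$ with mesh size $h$. Set $\mathcal{T}_h=\{T\in\mathcal{S}_h:\bar T\subset\bar\Omega\}$, $\Omega_h=\operatorname{int}(\bigcup_{T\in\mathcal{T}_h}\bar T)$, and let $\mathcal{T}_h^{ct}$ be the Clough–Tocher refinement of $\mathcal{T}_h$ (each triangle split into three by joining its vertices to its barycenter). $\mathcal{E}_h^B$ is the set of boundary edges (on $\partial\Omega_h$), $\mathbf{n}_h$ the outward unit normal of $\partial\Omega_h$, $h_e=\operatorname{diam}(e)$. A map $M:\partial\Omega_h\to\partial\Omega$ is given; $\mathfrak{d}(x)=M(x)-x$, $\delta(x)=|\mathfrak{d}(x)|$,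 $\mathbf{d}=\mathfrak{d}/\delta$, $\delta_e=\max_{x\in\bar e}\delta(x)$, and for piecewise smooth $\mathbf{v}$, $(S_h\mathbf{v})(x)=\mathbf{v}(x)+\delta(x)\frac{\partial\mathbf{v}}{\partial\mathbf{d}}(x)+\frac12\delta(x)^2\frac{\partial^2\mathbf{v}}{\partial\mathbf{d}^2}(x)$ for $x\in\partial\Omega_h$ (derivatives from the adjacent element). $\mathbf{V}_h=\{\mathbf{v}\in\mathbf{H}^1(\Omega_h):\mathbf{v}|_K\in\mathcal{P}_2(K)^2\ \forall K\in\mathcal{T}_h^{ct},\ \int_{\partial\Omega_h}\mathbf{v}\cdot\mathbf{n}_h\,ds=0\}$. Norms: $\|\mathbf{v}\|_h^2=\|\nabla\mathbf{v}\|_{L^2(\Omega_h)}^2+\sum_{e}h_e^{-1}\|S_h\mathbf{v}\|_{L^2(e)}^2$; $\|\mathbf{v}\|_{1,h}^2=\|\nabla\mathbf{v}\|_{L^2(\Omega_h)}^2+\sum_e h_e^{-1}\|\mathbf{v}\|_{L^2(e)}^2$; $|||\mathbf{v}|||_h^2=\|\mathbf{v}\|_h^2+\sum_e h_e\|\nabla\mathbf{v}\|_{L^2(e)}^2$ (sums over $e\in\mathcal{E}_h^B$). *)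

theory Defs
  imports "HOL-Analysis.Analysis"
begin

type_synonym pt = "real^2"

definition smooth_fun :: "(real \<Rightarrow> real) \<Rightarrow> bool" where
  "smooth_fun f \<longleftrightarrow> (\<forall>k x. ((deriv ^^ k) f) differentiable (at x))"

definition smooth_bounded_domain :: "pt set \<Rightarrow> bool" where
  "smooth_bounded_domain \<Omega> \<longleftrightarrow> open \<Omega> \<and> connected \<Omega> \<and> bounded \<Omega> \<and> \<Omega> \<noteq> {} \<and>
     (\<forall>p\<in>frontier \<Omega>. \<exists>U (R::pt \<Rightarrow> pt) f. open U \<and> p \<in> U \<and> orthogonal_transformation R \<and> smooth_fun f \<and>
        \<Omega> \<inter> U = {x\<in>U. (R (x - p))$2 < f ((R (x - p))$1)})"

definition is_triangle :: "pt set \<Rightarrow> bool" where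
  "is_triangle T \<longleftrightarrow> (\<exists>a b c. \<not> collinear {a, b, c} \<and> T = convex hull {a, b, c})"

definition vertices :: "pt set \<Rightarrow> pt set" where
  "vertices T = {x. x extreme_point_of T}"

definition edges :: "pt set \<Rightarrow> pt set set" where
  "edges T = {closed_segment a b | a b. a \<in> vertices T \<and> b \<in> vertices T \<and> a \<noteq> b}"

definition barycenter :: "pt set \<Rightarrow> pt" where
  "barycenter T = (1/3) *\<^sub>R (\<Sum>a\<in>vertices T. a)"

definition triangulation :: "pt set set \<Rightarrow> pt set \<Rightarrow> bool" where
  "triangulation \<S> S \<longleftrightarrow> finite \<S> \<and> (\<forall>T\<in>\<S>. is_triangle T) \<and> \<Union>\<S> = S \<and>
     (\<forall>T\<in>\<S>. \<forall>T'\<in>\<S>. T \<inter> T' face_of T \<and> T \<inter> T' face_of T')"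

definition shape_reg_quasi_unif :: "real \<Rightarrow> real \<Rightarrow> pt set set \<Rightarrow> bool" where
  "shape_reg_quasi_unif \<kappa> h \<S> \<longleftrightarrow> (\<exists>T\<in>\<S>. diameter T = h) \<and>
     (\<forall>T\<in>\<S>. diameter T \<le> h \<and> h \<le> \<kappa> * diameter T \<and> (\<exists>x. ball x (diameter T / \<kappa>) \<subseteq> T))"

definition interior_mesh :: "pt set set \<Rightarrow> pt set \<Rightarrow> pt set set" where
  "interior_mesh \<S> \<Omega> = {T\<in>\<S>. closure T \<subseteq> closure \<Omega>}"

definition mesh_domain :: "pt set set \<Rightarrow> pt set" where
  "mesh_domain \<T> = interior (\<Union>T\<in>\<T>. closure T)"

definition bdry_edges :: "pt set set \<Rightarrow> pt set set" where
  "bdry_edges \<T> = {e. \<exists>T\<in>\<T>. e \<in> edges T \<and> e \<subseteq> frontier (mesh_domain \<T>)}"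

definition ct_split :: "pt set \<Rightarrow> pt set set" where
  "ct_split T = {convex hull (insert (barycenter T) e) | e. e \<in> edges T}"

definition ct_mesh :: "pt set set \<Rightarrow> pt set set" where
  "ct_mesh \<T> = (\<Union>T\<in>\<T>. ct_split T)"

definition elem_of_edge :: "pt set set \<Rightarrow> pt set \<Rightarrow> pt set" where
  "elem_of_edge \<T> e = (SOME T. T \<in> \<T> \<and> e \<in> edges T)"

definition adj_elem :: "pt set set \<Rightarrow> pt set \<Rightarrow> pt set" where
  "adj_elem \<T> e = convex hull (insert (barycenter (elem_of_edge \<T> e)) e)"

definition outward_normal :: "pt set set \<Rightarrow> pt set \<Rightarrow> pt" where
  "outward_normal \<T> e = (SOME n. norm n = 1 \<and> (\<forall>x\<in>e. \<forall>y\<in>e. n \<bullet> (x - y) = 0) \<and>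
      (\<forall>c\<in>vertices (elem_of_edge \<T> e) - e. \<forall>y\<in>e. 0 < n \<bullet> (y - c)))"

text \<open>Arc-length integral over a straight segment e (independent of orientation).\<close>
definition edge_integral :: "pt set \<Rightarrow> (pt \<Rightarrow> real) \<Rightarrow> real" where
  "edge_integral e f = (SOME I. \<forall>a b. e = closed_segment a b \<and> a \<noteq> b \<longrightarrow>
       I = dist a b * integral {0..1} (\<lambda>t. f (a + t *\<^sub>R (b - a))))"

definition edge_L2sq :: "pt set \<Rightarrow> (pt \<Rightarrow> pt) \<Rightarrow> real" where
  "edge_L2sq e w = edge_integral e (\<lambda>x. (norm (w x))\<^sup>2)"

definition P2 :: "(pt \<Rightarrow> pt) set" where
  "P2 = {p. \<exists>c0 c1 c2 c3 c4 c5. \<forall>x. p x = c0 + (x$1) *\<^sub>R c1 + (x$2) *\<^sub>R c2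
        + ((x$1)\<^sup>2) *\<^sub>R c3 + (x$1 * x$2) *\<^sub>R c4 + ((x$2)\<^sup>2) *\<^sub>R c5}"

definition piece :: "(pt \<Rightarrow> pt) \<Rightarrow> pt set \<Rightarrow> (pt \<Rightarrow> pt)" where
  "piece v K = (SOME p. p \<in> P2 \<and> (\<forall>x\<in>K. v x = p x))"

text \<open>Continuous (hence H1-conforming) piecewise quadratics on the Clough-Tocher refinement
  with vanishing boundary flux.\<close>
definition Vh :: "pt set set \<Rightarrow> (pt \<Rightarrow> pt) set" where
  "Vh \<T> = {v. (\<forall>K\<in>ct_mesh \<T>. \<exists>p\<in>P2. \<forall>x\<in>K. v x = p x) \<and>
        (\<Sum>e\<in>bdry_edges \<T>. edge_integral e (\<lambda>x. v x \<bullet> outward_normal \<T> e)) = 0}"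

definition dirder :: "(pt \<Rightarrow> pt) \<Rightarrow> pt \<Rightarrow> pt \<Rightarrow> pt" where
  "dirder p d x = vector_derivative (\<lambda>t. p (x + t *\<^sub>R d)) (at 0)"

definition Sh :: "(pt \<Rightarrow> pt) \<Rightarrow> pt set set \<Rightarrow> (pt \<Rightarrow> pt) \<Rightarrow> pt set \<Rightarrow> pt \<Rightarrow> pt" where
  "Sh M \<T> v e x = (let p = piece v (adj_elem \<T> e); \<delta> = norm (M x - x); d = (M x - x) /\<^sub>R \<delta>
      in v x + \<delta> *\<^sub>R dirder p d x + (\<delta>\<^sup>2 / 2) *\<^sub>R dirder (dirder p d) d x)"

definition grad_sq :: "(pt \<Rightarrow> pt) \<Rightarrow> pt \<Rightarrow> real" where
  "grad_sq w x = (\<Sum>j\<in>Basis. (norm (frechet_derivative w (at x) j))\<^sup>2)"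

definition grad_L2sq :: "pt set set \<Rightarrow> (pt \<Rightarrow> pt) \<Rightarrow> real" where
  "grad_L2sq \<T> v = integral (mesh_domain \<T>) (grad_sq v)"

definition norm_h_sq :: "(pt \<Rightarrow> pt) \<Rightarrow> pt set set \<Rightarrow> (pt \<Rightarrow> pt) \<Rightarrow> real" where
  "norm_h_sq M \<T> v = grad_L2sq \<T> v + (\<Sum>e\<in>bdry_edges \<T>. edge_L2sq e (Sh M \<T> v e) / diameter e)"

definition norm_1h_sq :: "pt set set \<Rightarrow> (pt \<Rightarrow> pt) \<Rightarrow> real" where
  "norm_1h_sq \<T> v = grad_L2sq \<T> v + (\<Sum>e\<in>bdry_edges \<T>. edge_L2sq e v / diameter e)"

text \<open>On a boundary edge the gradient is the trace from the adjacent element.\<close>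
definition triple_sq :: "(pt \<Rightarrow> pt) \<Rightarrow> pt set set \<Rightarrow> (pt \<Rightarrow> pt) \<Rightarrow> real" where
  "triple_sq M \<T> v = norm_h_sq M \<T> v +
     (\<Sum>e\<in>bdry_edges \<T>. diameter e * edge_integral e (grad_sq (piece v (adj_elem \<T> e))))"

end

theory Submission
  imports Defs
begin



definition GD :: "pt \<Rightarrow> pt \<Rightarrow> pt \<Rightarrow> pt \<Rightarrow> pt \<Rightarrow> pt \<Rightarrow> pt \<times> pt" where
  "GD c1 c2 c3 c4 c5 x = (c1 + (2*x$1) *\<^sub>R c3 + (x$2) *\<^sub>R c4, c2 + (x$1) *\<^sub>R c4 + (2*x$2) *\<^sub>R c5)"

definition polyf :: "pt \<Rightarrow> pt \<Rightarrow> pt \<Rightarrow> pt \<Rightarrow> pt \<Rightarrow> pt \<Rightarrow> pt \<Rightarrow> pt" where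
  "polyf c0 c1 c2 c3 c4 c5 x = c0 + (x$1) *\<^sub>R c1 + (x$2) *\<^sub>R c2
        + ((x$1)\<^sup>2) *\<^sub>R c3 + (x$1 * x$2) *\<^sub>R c4 + ((x$2)\<^sup>2) *\<^sub>R c5"

lemma P2_deriv:
  "(polyf c0 c1 c2 c3 c4 c5 has_derivative (\<lambda>h. h$1 *\<^sub>R fst (GD c1 c2 c3 c4 c5 x) + h$2 *\<^sub>R snd (GD c1 c2 c3 c4 c5 x))) (at x)"
proof -
  have nth: "((\<lambda>x. x $ i) has_derivative (\<lambda>x. x $ i)) (at y)" for i and y :: pt
    using bounded_linear_vec_nth by (rule bounded_linear_imp_has_derivative)
  show ?thesis unfolding polyf_def GD_def
    apply (rule derivative_eq_intros refl nth)+
    apply (simp add: algebra_simps power2_eq_square)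
    done
qed

lemma Basis_pt: "(Basis :: pt set) = {axis 1 1, axis 2 1}"
  unfolding Basis_vec_def Basis_real_def UNIV_2 by (simp add: insert_commute)

lemma axis_neq: "axis 1 (1::real) \<noteq> (axis 2 1 :: pt)"
  by (simp add: axis_eq_axis)

lemma grad_sq_P2: "grad_sq (polyf c0 c1 c2 c3 c4 c5) x = (norm (GD c1 c2 c3 c4 c5 x))\<^sup>2"
proof -
  have f: "frechet_derivative (polyf c0 c1 c2 c3 c4 c5) (at x) = (\<lambda>h. h$1 *\<^sub>R fst (GD c1 c2 c3 c4 c5 x) + h$2 *\<^sub>R snd (GD c1 c2 c3 c4 c5 x))"
    by (rule sym, rule frechet_derivative_at, rule P2_deriv)
  have a1: "axis 1 (1::real) $ (1::2) = 1" "axis 1 (1::real) $ (2::2) = 0"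
     "axis 2 (1::real) $ (1::2) = 0" "axis 2 (1::real) $ (2::2) = 1"
    by (simp_all add: axis_def)
  have s: "(\<Sum>j\<in>{axis 1 1, axis 2 1}. g j) = g (axis 1 1) + g (axis 2 (1::real) :: pt)" for g :: "pt \<Rightarrow> real"
    using axis_neq by simp
  show ?thesis unfolding grad_sq_def f Basis_pt s a1 norm_prod_def
    by simp
qed

lemma P2_polyf: "p \<in> P2 \<Longrightarrow> \<exists>c0 c1 c2 c3 c4 c5. p = polyf c0 c1 c2 c3 c4 c5"
  unfolding P2_def polyf_def by fast

lemma dirder_P2: "dirder (polyf c0 c1 c2 c3 c4 c5) d x = d$1 *\<^sub>R fst (GD c1 c2 c3 c4 c5 x) + d$2 *\<^sub>R snd (GD c1 c2 c3 c4 c5 x)"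
proof -
  let ?L = "\<lambda>h::pt. h$1 *\<^sub>R fst (GD c1 c2 c3 c4 c5 x) + h$2 *\<^sub>R snd (GD c1 c2 c3 c4 c5 x)"
  have l: "((\<lambda>t::real. x + t *\<^sub>R d) has_derivative (\<lambda>t. t *\<^sub>R d)) (at 0)"
  proof -
    have "((\<lambda>t::real. t *\<^sub>R d) has_derivative (\<lambda>t. t *\<^sub>R d)) (at 0)"
      by (rule bounded_linear_imp_has_derivative[OF bounded_linear_scaleR_left])
    then have "((\<lambda>t::real. x + t *\<^sub>R d) has_derivative (\<lambda>t. 0 + t *\<^sub>R d)) (at 0)"
      by (rule has_derivative_add[OF has_derivative_const])
    then show ?thesis by simp
  qed
  have p: "(polyf c0 c1 c2 c3 c4 c5 has_derivative ?L) (at (x + 0 *\<^sub>R d))"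
    using P2_deriv by simp
  have "((\<lambda>t. polyf c0 c1 c2 c3 c4 c5 (x + t *\<^sub>R d)) has_derivative (\<lambda>t. ?L (t *\<^sub>R d))) (at 0)"
    using has_derivative_compose[OF l p] by (simp add: o_def)
  moreover have "(\<lambda>t. ?L (t *\<^sub>R d)) = (\<lambda>t. t *\<^sub>R ?L d)"
    by (simp add: scaleR_add_right)
  ultimately have "((\<lambda>t. polyf c0 c1 c2 c3 c4 c5 (x + t *\<^sub>R d)) has_vector_derivative ?L d) (at 0)"
    by (simp add: has_vector_derivative_def)
  then show ?thesis unfolding dirder_def by (rule vector_derivative_at)
qed

lemma dirder_P2_fun: "dirder (polyf c0 c1 c2 c3 c4 c5) d =
   polyf (d$1 *\<^sub>R c1 + d$2 *\<^sub>R c2) ((2 * d$1) *\<^sub>R c3 + d$2 *\<^sub>R c4) (d$1 *\<^sub>R c4 + (2 * d$2) *\<^sub>R c5) 0 0 0"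
  by (rule ext) (simp add: dirder_P2 GD_def polyf_def scaleR_add_right scaleR_add_left mult_ac)

lemma dirder2_P2: "dirder (dirder (polyf c0 c1 c2 c3 c4 c5) d) d x =
   d$1 *\<^sub>R ((2 * d$1) *\<^sub>R c3 + d$2 *\<^sub>R c4) + d$2 *\<^sub>R (d$1 *\<^sub>R c4 + (2 * d$2) *\<^sub>R c5)"
  unfolding dirder_P2_fun dirder_P2 by (simp add: GD_def polyf_def)


lemma norm_pt_sq: "(norm (d::pt))\<^sup>2 = (d$1)\<^sup>2 + (d$2)\<^sup>2"
  unfolding power2_norm_eq_inner inner_vec_def sum_2 by (simp add: power2_eq_square)

lemma norm_prod_sq: "(norm (a, b))\<^sup>2 = (norm a)\<^sup>2 + (norm b)\<^sup>2"
  unfolding norm_prod_def by simp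

lemma cs_bound:
  fixes A B :: pt
  assumes "norm (d::pt) \<le> 1"
  shows "norm (d$1 *\<^sub>R A + d$2 *\<^sub>R B) \<le> norm (A, B)"
proof -
  have t1: "norm (d$1 *\<^sub>R A + d$2 *\<^sub>R B) \<le> \<bar>d$1\<bar> * norm A + \<bar>d$2\<bar> * norm B"
    by (rule order_trans[OF norm_triangle_ineq]) simp
  moreover have "(\<bar>d$1\<bar> * norm A + \<bar>d$2\<bar> * norm B)\<^sup>2 \<le> ((d$1)\<^sup>2 + (d$2)\<^sup>2) * ((norm A)\<^sup>2 + (norm B)\<^sup>2)"
  proof -
    have "0 \<le> (\<bar>d$1\<bar> * norm B - \<bar>d$2\<bar> * norm A)\<^sup>2" by simp
    then show ?thesis by (simp add: power2_eq_square algebra_simps)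
  qed
  moreover have "((d$1)\<^sup>2 + (d$2)\<^sup>2) \<le> 1"
    using assms norm_pt_sq[of d] by (metis norm_ge_zero power_le_one)
  ultimately have "(\<bar>d$1\<bar> * norm A + \<bar>d$2\<bar> * norm B)\<^sup>2 \<le> (norm (A, B))\<^sup>2"
    unfolding norm_prod_sq
    by (smt (verit, best) mult_left_le_one_le zero_le_power2 add_nonneg_nonneg)
  then have "\<bar>d$1\<bar> * norm A + \<bar>d$2\<bar> * norm B \<le> norm (A, B)"
    by (rule power2_le_imp_le) simp
  with t1 show ?thesis by linarith
qed

lemma GD_affine: "GD c1 c2 c3 c4 c5 (a + t *\<^sub>R (b - a)) = GD c1 c2 c3 c4 c5 a + t *\<^sub>R (GD c1 c2 c3 c4 c5 b - GD c1 c2 c3 c4 c5 a)"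
  unfolding GD_def by (simp add: algebra_simps)

lemma continuous_GD: "continuous_on S (GD c1 c2 c3 c4 c5)"
  unfolding GD_def by (intro continuous_intros)

lemma dirder_shift: "dirder (polyf c0 c1 c2 c3 c4 c5) d (x + s *\<^sub>R d) - dirder (polyf c0 c1 c2 c3 c4 c5) d x
   = s *\<^sub>R dirder (dirder (polyf c0 c1 c2 c3 c4 c5) d) d y"
  unfolding dirder2_P2 dirder_P2 GD_def by (simp add: algebra_simps)


lemma local_bounds:
  fixes K :: "pt set"
  assumes K: "convex K" "compact K" and zr: "cball z r \<subseteq> K" "0 < r"
  obtains M w' where "0 \<le> M" "\<forall>x\<in>K. norm (GD c1 c2 c3 c4 c5 x) \<le> M"
    "\<And>d x. norm d \<le> 1 \<Longrightarrow> x \<in> K \<Longrightarrow> norm (dirder (polyf c0 c1 c2 c3 c4 c5) d x) \<le> M"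
    "\<And>d x. norm d \<le> 1 \<Longrightarrow> norm (dirder (dirder (polyf c0 c1 c2 c3 c4 c5) d) d x) \<le> M / r"
    "ball w' (r/4) \<subseteq> K" "\<And>y. y \<in> ball w' (r/4) \<Longrightarrow> M\<^sup>2 / 4 \<le> grad_sq (polyf c0 c1 c2 c3 c4 c5) y"
proof -
  let ?G = "GD c1 c2 c3 c4 c5" and ?p = "polyf c0 c1 c2 c3 c4 c5"
  have zK: "z \<in> K" using zr by (auto intro: subsetD[OF zr(1)])
  have "continuous_on K (\<lambda>x. norm (?G x))"
    by (intro continuous_on_norm continuous_GD)
  then obtain w where wK: "w \<in> K" and wmax: "\<forall>y\<in>K. norm (?G y) \<le> norm (?G w)"
    using continuous_attains_sup[OF K(2)] zK by blast
  define M where "M = norm (?G w)"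
  have M0: "0 \<le> M" unfolding M_def by simp
  have bnd: "\<forall>x\<in>K. norm (?G x) \<le> M" using wmax M_def by simp
  have d1: "norm (dirder ?p d x) \<le> M" if "norm d \<le> 1" "x \<in> K" for d x
  proof -
    have "norm (dirder ?p d x) \<le> norm (fst (?G x), snd (?G x))"
      unfolding dirder_P2 by (rule cs_bound[OF that(1)])
    also have "\<dots> \<le> M" using bnd that(2) by simp
    finally show ?thesis .
  qed
  have d2: "norm (dirder (dirder ?p d) d x) \<le> M / r" if "norm d \<le> 1" for d x
  proof -
    have e: "dirder ?p d ((z - r *\<^sub>R d) + (2*r) *\<^sub>R d) - dirder ?p d (z - r *\<^sub>R d)
       = (2*r) *\<^sub>R dirder (dirder ?p d) d x" by (rule dirder_shift)
    have "(2*r) *\<^sub>R d = r *\<^sub>R d + r *\<^sub>R d" by (simp add: scaleR_add_left[symmetric])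
    then have "(z - r *\<^sub>R d) + (2*r) *\<^sub>R d = z + r *\<^sub>R d" by simp
    with e have e2: "(2*r) *\<^sub>R dirder (dirder ?p d) d x = dirder ?p d (z + r *\<^sub>R d) - dirder ?p d (z - r *\<^sub>R d)"
      by simp
    have nd: "norm (r *\<^sub>R d) \<le> r" using that zr(2) by (simp add: mult_left_le)
    have in1: "z + r *\<^sub>R d \<in> K" "z - r *\<^sub>R d \<in> K"
      using nd zr(1) by (auto simp: dist_norm subset_iff)
    have "norm ((2*r) *\<^sub>R dirder (dirder ?p d) d x) \<le> M + M"
      unfolding e2 by (rule order_trans[OF norm_triangle_ineq4]) (intro add_mono d1 that in1)
    then have "2 * r * norm (dirder (dirder ?p d) d x) \<le> 2 * M" using zr(2) by simp
    then show ?thesis using zr(2) by (simp add: field_simps)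
  qed
  define w' where "w' = w + (1/4) *\<^sub>R (z - w)"
  have yrep: "y = (3/4) *\<^sub>R w + (1/4) *\<^sub>R (w + 4 *\<^sub>R (y - w))" for y :: pt
    by (simp add: vec_eq_iff algebra_simps)
  have y'in: "w + 4 *\<^sub>R (y - w) \<in> K" if "y \<in> ball w' (r/4)" for y
  proof -
    have eq: "w + 4 *\<^sub>R (y - w) - z = 4 *\<^sub>R (y - w')" unfolding w'_def by (simp add: vec_eq_iff algebra_simps)
    have "dist z (w + 4 *\<^sub>R (y - w)) = norm (w + 4 *\<^sub>R (y - w) - z)" by (simp add: dist_norm norm_minus_commute)
    also have "\<dots> = 4 * norm (y - w')" unfolding eq by simp
    finally have "dist z (w + 4 *\<^sub>R (y - w)) = 4 * dist y w'" by (simp add: dist_norm)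
    then have "dist z (w + 4 *\<^sub>R (y - w)) \<le> r" using that by (simp add: dist_commute)
    then show ?thesis using zr(1) by auto
  qed
  have ballK: "ball w' (r/4) \<subseteq> K"
  proof
    fix y assume "y \<in> ball w' (r/4)"
    then have "(3/4) *\<^sub>R w + (1/4) *\<^sub>R (w + 4 *\<^sub>R (y - w)) \<in> K"
      using convexD[OF K(1) wK y'in] by simp
    then show "y \<in> K" using yrep[of y] by simp
  qed
  have low: "M\<^sup>2 / 4 \<le> grad_sq ?p y" if "y \<in> ball w' (r/4)" for y
  proof -
    let ?y' = "w + 4 *\<^sub>R (y - w)"
    have "y = w + (1/4) *\<^sub>R (?y' - w)" by (simp add: algebra_simps)
    then have gy: "?G y = ?G w + (1/4) *\<^sub>R (?G ?y' - ?G w)" using GD_affine[of c1 c2 c3 c4 c5 w "1/4" ?y'] by simp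
    have "norm (?G ?y' - ?G w) \<le> M + M"
      using bnd y'in[OF that] wK by (intro order_trans[OF norm_triangle_ineq4] add_mono) auto
    then have "norm ((1/4) *\<^sub>R (?G ?y' - ?G w)) \<le> M / 2" by simp
    moreover have "M - norm ((1/4) *\<^sub>R (?G ?y' - ?G w)) \<le> norm (?G y)"
      unfolding gy M_def by (rule norm_diff_ineq)
    ultimately have "M / 2 \<le> norm (?G y)" by linarith
    then have "(M/2)\<^sup>2 \<le> (norm (?G y))\<^sup>2" using M0 by (intro power_mono) auto
    then show ?thesis unfolding grad_sq_P2 by (simp add: power_divide)
  qed
  show ?thesis using that[OF M0 bnd d1 d2 ballK low] by blast
qed




lemma tri_vertices:
  assumes "\<not> collinear {a, b, c :: pt}"
  shows "vertices (convex hull {a,b,c}) = {a,b,c}" "a \<noteq> b" "a \<noteq> c" "b \<noteq> c"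
proof -
  have nd: "\<not> affine_dependent {a,b,c}" "a \<noteq> b" "a \<noteq> c" "b \<noteq> c"
    using assms collinear_3_eq_affine_dependent by blast+
  show "vertices (convex hull {a,b,c}) = {a,b,c}"
    unfolding vertices_def using extreme_point_of_convex_hull_affine_independent[OF nd(1)] by blast
  show "a \<noteq> b" "a \<noteq> c" "b \<noteq> c" using nd by auto
qed

lemma edge_tri:
  assumes "is_triangle T" "e \<in> edges T"
  obtains u v w where "T = convex hull {u,v,w}" "barycenter T = (1/3) *\<^sub>R (u+v+w)"
    "e = closed_segment u v" "u \<noteq> v" "u \<noteq> w" "v \<noteq> w" "\<not> collinear {u,v,w}"
proof -
  obtain a b c where nc: "\<not> collinear {a,b,c}" and T: "T = convex hull {a,b,c}"
    using assms(1) unfolding is_triangle_def by blast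
  note tv = tri_vertices[OF nc]
  obtain u v where e: "e = closed_segment u v" and uv: "u \<in> {a,b,c}" "v \<in> {a,b,c}" "u \<noteq> v"
    using assms(2) unfolding edges_def T tv(1) by blast
  obtain w where w: "{u,v,w} = {a,b,c}" "w \<noteq> u" "w \<noteq> v"
    using uv tv(2-4) by auto
  have T': "T = convex hull {u,v,w}" using T w(1) by simp
  have "barycenter T = (1/3) *\<^sub>R (\<Sum>x\<in>{u,v,w}. x)"
    unfolding barycenter_def T tv(1) w(1) ..
  also have "(\<Sum>x\<in>{u,v,w}. x) = u + v + w" using uv(3) w(2,3) by (simp add: algebra_simps)
  finally have b: "barycenter T = (1/3) *\<^sub>R (u+v+w)" .
  have "\<not> collinear {u,v,w}" using nc w(1) by simp
  then show ?thesis using that[OF T' b e uv(3)] w(2,3) by auto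
qed

lemma hull_insert_hull: "convex hull (insert a (convex hull S)) = convex hull (insert a S)"
proof
  show "convex hull (insert a S) \<subseteq> convex hull (insert a (convex hull S))"
    by (intro hull_mono) (auto intro: hull_inc)
  have "insert a (convex hull S) \<subseteq> convex hull (insert a S)"
    by (auto intro: hull_inc hull_mono[THEN subsetD, of S "insert a S"])
  then show "convex hull (insert a (convex hull S)) \<subseteq> convex hull (insert a S)"
    by (intro hull_minimal) auto
qed

lemma sub_ball:
  fixes u v w x0 :: pt
  assumes "ball x0 \<rho> \<subseteq> convex hull {u,v,w}"
  shows "ball ((1/3) *\<^sub>R (x0 + u + v)) (\<rho>/3) \<subseteq> convex hull {(1/3) *\<^sub>R (u+v+w), u, v}"
proof
  fix y assume y: "y \<in> ball ((1/3) *\<^sub>R (x0 + u + v)) (\<rho>/3)"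
  let ?y' = "3 *\<^sub>R y - u - v"
  have eq: "?y' - x0 = 3 *\<^sub>R (y - (1/3) *\<^sub>R (x0 + u + v))" by (simp add: vec_eq_iff algebra_simps)
  have "dist x0 ?y' = norm (?y' - x0)" by (simp add: dist_norm norm_minus_commute)
  also have "\<dots> = 3 * norm (y - (1/3) *\<^sub>R (x0 + u + v))" unfolding eq by simp
  finally have "dist x0 ?y' = 3 * dist y ((1/3) *\<^sub>R (x0 + u + v))" by (simp add: dist_norm)
  then have "?y' \<in> ball x0 \<rho>" using y by (simp add: dist_commute)
  then have "?y' \<in> convex hull {u,v,w}" using assms by auto
  then obtain s t q where stq: "0 \<le> s" "0 \<le> t" "0 \<le> q" "s + t + q = 1"
    and ye: "?y' = s *\<^sub>R u + t *\<^sub>R v + q *\<^sub>R w"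
    unfolding convex_hull_3 by blast
  have "y = q *\<^sub>R ((1/3) *\<^sub>R (u+v+w)) + ((s+1-q)/3) *\<^sub>R u + ((t+1-q)/3) *\<^sub>R v"
  proof -
    have "y = (1/3) *\<^sub>R (?y' + u + v)" by (simp add: vec_eq_iff algebra_simps)
    also have "\<dots> = q *\<^sub>R ((1/3) *\<^sub>R (u+v+w)) + ((s+1-q)/3) *\<^sub>R u + ((t+1-q)/3) *\<^sub>R v"
      unfolding ye by (simp add: vec_eq_iff algebra_simps diff_divide_distrib add_divide_distrib)
    finally show ?thesis .
  qed
  moreover have "0 \<le> (s+1-q)/3" "0 \<le> (t+1-q)/3" "q + (s+1-q)/3 + (t+1-q)/3 = 1"
    using stq by (auto simp: field_simps)
  ultimately show "y \<in> convex hull {(1/3) *\<^sub>R (u+v+w), u, v}"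
    unfolding convex_hull_3 using stq(3) by blast
qed

lemma tri_cover:
  fixes u v w :: pt
  defines "b \<equiv> (1/3) *\<^sub>R (u+v+w)"
  shows "convex hull {u,v,w} \<subseteq> convex hull {b,u,v} \<union> convex hull {b,v,w} \<union> convex hull {b,u,w}"
proof
  fix y assume "y \<in> convex hull {u,v,w}"
  then obtain l1 l2 l3 where stq: "0 \<le> l1" "0 \<le> l2" "0 \<le> l3" "l1 + l2 + l3 = 1"
    and ye: "y = l1 *\<^sub>R u + l2 *\<^sub>R v + l3 *\<^sub>R w"
    unfolding convex_hull_3 by blast
  consider "l3 \<le> l1 \<and> l3 \<le> l2" | "l1 \<le> l2 \<and> l1 \<le> l3" | "l2 \<le> l1 \<and> l2 \<le> l3" by linarith
  then show "y \<in> convex hull {b,u,v} \<union> convex hull {b,v,w} \<union> convex hull {b,u,w}"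
  proof cases
    case 1
    have "y = (3*l3) *\<^sub>R b + (l1 - l3) *\<^sub>R u + (l2 - l3) *\<^sub>R v"
      unfolding ye b_def by (simp add: vec_eq_iff algebra_simps)
    moreover have "(3*l3) + (l1 - l3) + (l2 - l3) = 1" using stq by simp
    ultimately have "y \<in> convex hull {b,u,v}" unfolding convex_hull_3 using 1 stq by force
    then show ?thesis by blast
  next
    case 2
    have "y = (3*l1) *\<^sub>R b + (l2 - l1) *\<^sub>R v + (l3 - l1) *\<^sub>R w"
      unfolding ye b_def by (simp add: vec_eq_iff algebra_simps)
    moreover have "(3*l1) + (l2 - l1) + (l3 - l1) = 1" using stq by simp
    ultimately have "y \<in> convex hull {b,v,w}" unfolding convex_hull_3 using 2 stq by force
    then show ?thesis by blast
  next
    case 3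
    have "y = (3*l2) *\<^sub>R b + (l1 - l2) *\<^sub>R u + (l3 - l2) *\<^sub>R w"
      unfolding ye b_def by (simp add: vec_eq_iff algebra_simps)
    moreover have "(3*l2) + (l1 - l2) + (l3 - l2) = 1" using stq by simp
    ultimately have "y \<in> convex hull {b,u,w}" unfolding convex_hull_3 using 3 stq by force
    then show ?thesis by blast
  qed
qed




lemma seg_param: "t \<in> {0..1} \<Longrightarrow> a + t *\<^sub>R (b - a) \<in> closed_segment a b"
  unfolding closed_segment_def by (auto intro!: exI[of _ t] simp: algebra_simps)

lemma seg_param_ex: "x \<in> closed_segment a b \<Longrightarrow> \<exists>t\<in>{0..1}. x = a + t *\<^sub>R (b - a)"
  unfolding closed_segment_def by (auto simp: algebra_simps)

lemma diameter_seg: "diameter (closed_segment a (b::pt)) = dist a b"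
proof (rule antisym)
  show "diameter (closed_segment a b) \<le> dist a b"
  proof (rule diameter_le)
    fix x y assume xy: "x \<in> closed_segment a b" "y \<in> closed_segment a b"
    obtain s where s: "s \<in> {0..1}" "x = a + s *\<^sub>R (b - a)" using seg_param_ex[OF xy(1)] by blast
    obtain t where t: "t \<in> {0..1}" "y = a + t *\<^sub>R (b - a)" using seg_param_ex[OF xy(2)] by blast
    note st = s(1) t(1) s(2) t(2)
    have "x - y = (s - t) *\<^sub>R (b - a)" unfolding s(2) t(2) by (simp add: scaleR_diff_left)
    then have "norm (x - y) = \<bar>s - t\<bar> * norm (b - a)" by simp
    also have "\<dots> \<le> 1 * norm (b - a)" using st by (intro mult_right_mono) auto
    also have "\<dots> = dist a b" by (simp add: dist_norm norm_minus_commute)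
    finally show "norm (x - y) \<le> dist a b" .
  qed (rule disjI2, simp)
  show "dist a b \<le> diameter (closed_segment a b)"
    by (rule diameter_bounded_bound) (simp_all add: bounded_closed_segment)
qed

lemma integral_flip01: "integral {0..1::real} (\<lambda>t. g (1 - t)) = integral {0..1} (g :: real \<Rightarrow> real)"
proof -
  have "integral {(-1) - (-1)..0 - (-1::real)} (\<lambda>x. (\<lambda>y. g (- y)) (x + (-1))) = integral {-1..0} (\<lambda>y. g (- y))"
    by (rule integral_shift_real_ivl)
  moreover have "integral {-1..0::real} (\<lambda>y. g (- y)) = integral {0..1} g"
    using Henstock_Kurzweil_Integration.integral_reflect_real[where a=0 and b=1 and f=g] by simp
  ultimately show ?thesis by simp
qed

lemma edge_integral_seg:
  assumes "a \<noteq> b"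
  shows "edge_integral (closed_segment a b) f = dist a b * integral {0..1} (\<lambda>t. f (a + t *\<^sub>R (b - a)))"
proof -
  let ?I = "dist a b * integral {0..1} (\<lambda>t. f (a + t *\<^sub>R (b - a)))"
  let ?P = "\<lambda>I. \<forall>a' b'. closed_segment a b = closed_segment a' b' \<and> a' \<noteq> b' \<longrightarrow>
       I = dist a' b' * integral {0..1} (\<lambda>t. f (a' + t *\<^sub>R (b' - a')))"
  have "?P ?I"
  proof (intro allI impI)
    fix a' b' assume h: "closed_segment a b = closed_segment a' b' \<and> a' \<noteq> b'"
    then have "{a,b} = {a',b'}" by simp
    then have "(a = a' \<and> b = b') \<or> (a = b' \<and> b = a')" by (simp add: doubleton_eq_iff)
    then consider "a' = a" "b' = b" | "a' = b" "b' = a" by blast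
    then show "?I = dist a' b' * integral {0..1} (\<lambda>t. f (a' + t *\<^sub>R (b' - a')))"
    proof cases
      case 1 then show ?thesis by simp
    next
      case 2
      have "(\<lambda>t. f (b + t *\<^sub>R (a - b))) = (\<lambda>t. (\<lambda>s. f (a + s *\<^sub>R (b - a))) (1 - t))"
        by (rule ext) (simp add: algebra_simps)
      then have "integral {0..1} (\<lambda>t. f (b + t *\<^sub>R (a - b))) = integral {0..1} (\<lambda>t. f (a + t *\<^sub>R (b - a)))"
        using integral_flip01[of "\<lambda>s. f (a + s *\<^sub>R (b - a))"] by simp
      then show ?thesis using 2 by (simp add: dist_commute)
    qed
  qed
  then have "?P (edge_integral (closed_segment a b) f)"
    unfolding edge_integral_def by (rule someI)
  then show ?thesis using assms by blast
qed

lemma EI_le_const: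
  assumes "a \<noteq> b" "\<forall>x\<in>closed_segment a b. f x \<le> B" "0 \<le> B"
  shows "edge_integral (closed_segment a b) f \<le> dist a b * B"
proof -
  have "integral {0..1} (\<lambda>t. f (a + t *\<^sub>R (b - a))) \<le> B"
  proof (cases "(\<lambda>t. f (a + t *\<^sub>R (b - a))) integrable_on {0..1}")
    case True
    have "integral {0..1} (\<lambda>t. f (a + t *\<^sub>R (b - a))) \<le> integral {0..1::real} (\<lambda>t. B)"
      using True assms(2) seg_param by (intro integral_le) auto
    then show ?thesis by simp
  next
    case False then show ?thesis using assms(3) by (simp add: not_integrable_integral)
  qed
  then show ?thesis unfolding edge_integral_seg[OF assms(1)] by (intro mult_left_mono) auto
qed

lemma EI_nonneg:
  assumes "a \<noteq> b" "\<forall>x\<in>closed_segment a b. 0 \<le> f x"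
  shows "0 \<le> edge_integral (closed_segment a b) f"
proof -
  have "0 \<le> integral {0..1} (\<lambda>t. f (a + t *\<^sub>R (b - a)))"
  proof (cases "(\<lambda>t. f (a + t *\<^sub>R (b - a))) integrable_on {0..1}")
    case True
    then show ?thesis using assms(2) seg_param by (intro integral_nonneg) auto
  next
    case False then show ?thesis by (simp add: not_integrable_integral)
  qed
  then show ?thesis unfolding edge_integral_seg[OF assms(1)] by simp
qed

lemma EI_bound2:
  assumes "a \<noteq> b" "\<forall>x\<in>closed_segment a b. f x \<le> 2 * g x + B" "\<forall>x\<in>closed_segment a b. 0 \<le> g x"
    "0 \<le> B" "(\<lambda>t. g (a + t *\<^sub>R (b - a))) integrable_on {0..1}"
  shows "edge_integral (closed_segment a b) f \<le> 2 * edge_integral (closed_segment a b) g + dist a b * B"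
proof -
  have gi: "0 \<le> integral {0..1} (\<lambda>t. g (a + t *\<^sub>R (b - a)))"
    using assms(3,5) seg_param by (intro integral_nonneg) auto
  have "integral {0..1} (\<lambda>t. f (a + t *\<^sub>R (b - a))) \<le> 2 * integral {0..1} (\<lambda>t. g (a + t *\<^sub>R (b - a))) + B"
  proof (cases "(\<lambda>t. f (a + t *\<^sub>R (b - a))) integrable_on {0..1}")
    case True
    have i1: "(\<lambda>t. 2 *\<^sub>R g (a + t *\<^sub>R (b - a))) integrable_on {0..1}"
      using assms(5) by (rule integrable_cmul)
    have i2: "(\<lambda>t. 2 *\<^sub>R g (a + t *\<^sub>R (b - a)) + B) integrable_on {0..1}"
      using i1 by (rule integrable_add) auto
    have "integral {0..1} (\<lambda>t. f (a + t *\<^sub>R (b - a))) \<le> integral {0..1::real} (\<lambda>t. 2 *\<^sub>R g (a + t *\<^sub>R (b - a)) + B)"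
      using True i2 assms(2) seg_param by (intro integral_le) auto
    also have "\<dots> = integral {0..1::real} (\<lambda>t. 2 *\<^sub>R g (a + t *\<^sub>R (b - a))) + integral {0..1::real} (\<lambda>t. B)"
      using i1 by (rule integral_add) auto
    also have "\<dots> = 2 * integral {0..1} (\<lambda>t. g (a + t *\<^sub>R (b - a))) + B"
      by simp
    finally show ?thesis .
  next
    case False then show ?thesis using assms(4) gi by (simp add: not_integrable_integral)
  qed
  then have "dist a b * integral {0..1} (\<lambda>t. f (a + t *\<^sub>R (b - a))) \<le> dist a b * (2 * integral {0..1} (\<lambda>t. g (a + t *\<^sub>R (b - a))) + B)"
    by (intro mult_left_mono) auto
  then show ?thesis unfolding edge_integral_seg[OF assms(1)] by (simp add: algebra_simps)
qed




lemma cont_abs_int: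
  fixes h :: "pt \<Rightarrow> real"
  assumes "continuous_on UNIV h" "bounded S" "S \<in> sets lebesgue"
  shows "h absolutely_integrable_on S"
proof -
  obtain a where a: "S \<subseteq> cbox (-a) a" using bounded_subset_cbox_symmetric[OF assms(2)] by blast
  have "h absolutely_integrable_on cbox (-a) a"
    using assms(1) by (intro absolutely_integrable_continuous) (rule continuous_on_subset, auto)
  then show ?thesis using assms(3) a by (rule set_integrable_subset)
qed

lemma cont_grad_sq_P2: "continuous_on UNIV (grad_sq (polyf c0 c1 c2 c3 c4 c5))"
proof -
  have "grad_sq (polyf c0 c1 c2 c3 c4 c5) = (\<lambda>x. (norm (GD c1 c2 c3 c4 c5 x))\<^sup>2)"
    by (rule ext) (rule grad_sq_P2)
  then show ?thesis by (simp add: continuous_intros continuous_GD)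
qed

lemma grad_sq_interior:
  assumes "\<forall>x\<in>K. v x = polyf c0 c1 c2 c3 c4 c5 x" "x \<in> interior K"
  shows "grad_sq v x = grad_sq (polyf c0 c1 c2 c3 c4 c5) x"
proof -
  let ?L = "\<lambda>h. h$1 *\<^sub>R fst (GD c1 c2 c3 c4 c5 x) + h$2 *\<^sub>R snd (GD c1 c2 c3 c4 c5 x)"
  have "(v has_derivative ?L) (at x)"
  proof (rule has_derivative_transform_within_open[OF P2_deriv[of c0 c1 c2 c3 c4 c5 x] open_interior assms(2)])
    fix y assume "y \<in> interior K"
    then have "y \<in> K" using interior_subset by blast
    then show "polyf c0 c1 c2 c3 c4 c5 y = v y" using assms(1) by simp
  qed
  then have "frechet_derivative v (at x) = frechet_derivative (polyf c0 c1 c2 c3 c4 c5) (at x)"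
    using frechet_derivative_at[OF P2_deriv[of c0 c1 c2 c3 c4 c5 x]] frechet_derivative_at by metis
  then show ?thesis unfolding grad_sq_def by simp
qed

lemma piece_abs_int:
  assumes "convex K" "compact K" "\<forall>x\<in>K. v x = polyf c0 c1 c2 c3 c4 c5 x"
  shows "grad_sq v absolutely_integrable_on K"
proof -
  have "grad_sq (polyf c0 c1 c2 c3 c4 c5) absolutely_integrable_on K"
    using assms(2) by (intro cont_abs_int cont_grad_sq_P2) (auto intro: compact_imp_bounded lmeasurable_compact fmeasurableD)
  moreover have "negligible (frontier K)" using assms(1) by (rule negligible_convex_frontier)
  moreover have "grad_sq v x = grad_sq (polyf c0 c1 c2 c3 c4 c5) x" if "x \<in> K - frontier K" for x
  proof -
    have "x \<in> interior K" using that assms(2) compact_imp_closed frontier_def closure_closed by fastforce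
    then show ?thesis by (rule grad_sq_interior[OF assms(3)])
  qed
  ultimately show ?thesis by (rule absolutely_integrable_spike)
qed

lemma grad_sq_nonneg: "0 \<le> grad_sq v x"
  unfolding grad_sq_def by (simp add: sum_nonneg)




lemma open_lebesgue: "open (S::pt set) \<Longrightarrow> S \<in> sets lebesgue"
  by (metis borel_open sets_completionI_sets sets_lborel)

lemma tri_convex_compact:
  assumes "is_triangle T" shows "convex T" "compact T"
  using assms unfolding is_triangle_def
  by (auto intro: convex_convex_hull finite_imp_compact_convex_hull)

lemma vertices_finite:
  assumes "is_triangle T" shows "finite (vertices T)" "card (vertices T) \<le> 3"
proof -
  obtain a b c where nc: "\<not> collinear {a,b,c}" and T: "T = convex hull {a,b,c}"
    using assms unfolding is_triangle_def by blast
  have "vertices T = {a,b,c}" using tri_vertices[OF nc] T by simp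
  then show "finite (vertices T)" "card (vertices T) \<le> 3" by (auto simp: card_insert_if)
qed

lemma edges_finite:
  assumes "is_triangle T" shows "finite (edges T)" "card (edges T) \<le> 9"
proof -
  have sub: "edges T \<subseteq> (\<lambda>(a,b). closed_segment a b) ` (vertices T \<times> vertices T)"
    unfolding edges_def by auto
  have fv: "finite (vertices T \<times> vertices T)" using vertices_finite[OF assms] by simp
  show "finite (edges T)" using sub fv finite_subset by blast
  have "card (edges T) \<le> card ((\<lambda>(a,b). closed_segment a b) ` (vertices T \<times> vertices T))"
    using sub fv by (intro card_mono) auto
  also have "\<dots> \<le> card (vertices T \<times> vertices T)" using fv by (rule card_image_le)
  also have "\<dots> = card (vertices T) * card (vertices T)" by (simp add: card_cartesian_product)
  also have "\<dots> \<le> 3 * 3" using vertices_finite[OF assms] by (intro mult_mono) auto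
  finally show "card (edges T) \<le> 9" by simp
qed

lemma ct_elem:
  assumes "is_triangle T" "e \<in> edges T"
  shows "convex (convex hull (insert (barycenter T) e))" "compact (convex hull (insert (barycenter T) e))"
proof -
  obtain u v w where "e = closed_segment u v" using edge_tri[OF assms] by metis
  then show "convex (convex hull (insert (barycenter T) e))" "compact (convex hull (insert (barycenter T) e))"
    by (auto intro: compact_convex_hull compact_insert compact_segment)
qed

lemma tri_in_ct:
  assumes "is_triangle T"
  shows "T \<subseteq> \<Union>(ct_split T)"
proof -
  obtain a b c where nc: "\<not> collinear {a,b,c}" and T: "T = convex hull {a,b,c}"
    using assms unfolding is_triangle_def by blast
  note tv = tri_vertices[OF nc]
  have V: "vertices T = {a,b,c}" using tv T by simp
  have bary: "barycenter T = (1/3) *\<^sub>R (a+b+c)"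
  proof -
    have "(\<Sum>x\<in>{a,b,c}. x) = a + b + c" using tv(2-4) by (simp add: algebra_simps)
    then show ?thesis unfolding barycenter_def V by simp
  qed
  have sub: "convex hull {barycenter T, x, y} \<in> ct_split T" if "x \<in> {a,b,c}" "y \<in> {a,b,c}" "x \<noteq> y" for x y
  proof -
    have E: "closed_segment x y \<in> edges T" unfolding edges_def V using that by blast
    have H: "convex hull (insert (barycenter T) (closed_segment x y)) = convex hull {barycenter T, x, y}"
      unfolding segment_convex_hull hull_insert_hull ..
    show ?thesis unfolding ct_split_def
      by (rule CollectI, rule exI[of _ "closed_segment x y"]) (simp add: E H)
  qed
  have "T \<subseteq> convex hull {barycenter T,a,b} \<union> convex hull {barycenter T,b,c} \<union> convex hull {barycenter T,a,c}"
    unfolding T bary[unfolded T] by (rule tri_cover)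
  then show ?thesis using sub tv(2-4) by blast
qed

lemma abs_int_Union:
  fixes f :: "pt \<Rightarrow> real"
  assumes "finite F" "\<And>K. K \<in> F \<Longrightarrow> f absolutely_integrable_on K"
  shows "f absolutely_integrable_on (\<Union>F)"
  using assms
proof (induction F rule: finite_induct)
  case empty then show ?case by (simp add: absolutely_integrable_on_def)
next
  case (insert K F)
  then show ?case by (simp add: absolutely_integrable_Un)
qed

locale meshloc =
  fixes \<T> :: "pt set set" and v :: "pt \<Rightarrow> pt"
  assumes fin: "finite \<T>" and tri: "\<And>T. T \<in> \<T> \<Longrightarrow> is_triangle T"
    and disj: "\<And>T T'. T \<in> \<T> \<Longrightarrow> T' \<in> \<T> \<Longrightarrow> T \<noteq> T' \<Longrightarrow> interior T \<inter> interior T' = {}"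
    and vV: "v \<in> Vh \<T>"
begin

lemma ct_finite: "finite (ct_mesh \<T>)"
proof -
  have "ct_split T = (\<lambda>e. convex hull (insert (barycenter T) e)) ` edges T" for T
    unfolding ct_split_def by blast
  then show ?thesis unfolding ct_mesh_def using fin edges_finite(1)[OF tri] by simp
qed

lemma g_int_ct: "K \<in> ct_mesh \<T> \<Longrightarrow> grad_sq v absolutely_integrable_on K"
proof -
  assume K: "K \<in> ct_mesh \<T>"
  then obtain T e where Te: "T \<in> \<T>" "e \<in> edges T" "K = convex hull (insert (barycenter T) e)"
    unfolding ct_mesh_def ct_split_def by blast
  obtain p where p: "p \<in> P2" "\<forall>x\<in>K. v x = p x" using vV K unfolding Vh_def by blast
  obtain c0 c1 c2 c3 c4 c5 where "p = polyf c0 c1 c2 c3 c4 c5"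
    using P2_polyf[OF p(1)] by blast
  with p(2) have "\<forall>x\<in>K. v x = polyf c0 c1 c2 c3 c4 c5 x" by simp
  then show ?thesis using ct_elem[OF tri[OF Te(1)] Te(2)] Te(3) by (intro piece_abs_int) auto
qed

lemma mesh_sub: "mesh_domain \<T> \<subseteq> \<Union>(ct_mesh \<T>)"
proof -
  have "mesh_domain \<T> \<subseteq> (\<Union>T\<in>\<T>. closure T)" unfolding mesh_domain_def by (rule interior_subset)
  also have "\<dots> = \<Union>\<T>"
  proof -
    have "closure T = T" if "T \<in> \<T>" for T
      using closure_closed[OF compact_imp_closed[OF tri_convex_compact(2)[OF tri[OF that]]]] .
    then show ?thesis by simp
  qed
  also have "\<dots> \<subseteq> \<Union>(ct_mesh \<T>)"
  proof
    fix x assume "x \<in> \<Union>\<T>"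
    then obtain T where T: "T \<in> \<T>" "x \<in> T" by blast
    then obtain K where "K \<in> ct_split T" "x \<in> K" using tri_in_ct[OF tri[OF T(1)]] by blast
    then show "x \<in> \<Union>(ct_mesh \<T>)" unfolding ct_mesh_def using T(1) by blast
  qed
  finally show ?thesis .
qed

lemma g_int: "grad_sq v absolutely_integrable_on mesh_domain \<T>"
proof -
  have "grad_sq v absolutely_integrable_on \<Union>(ct_mesh \<T>)"
    using ct_finite g_int_ct by (rule abs_int_Union)
  moreover have "mesh_domain \<T> \<in> sets lebesgue"
    unfolding mesh_domain_def by (rule open_lebesgue) simp
  ultimately show ?thesis using mesh_sub by (rule set_integrable_subset)
qed

lemma int_sub: "open U \<Longrightarrow> U \<subseteq> mesh_domain \<T> \<Longrightarrow> grad_sq v integrable_on U"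
proof -
  assume U: "open U" "U \<subseteq> mesh_domain \<T>"
  have "grad_sq v absolutely_integrable_on U"
    by (rule set_integrable_subset[OF g_int open_lebesgue[OF U(1)] U(2)])
  then show ?thesis by (simp add: absolutely_integrable_on_def)
qed

lemma interior_in_mesh: "T \<in> \<T> \<Longrightarrow> interior T \<subseteq> mesh_domain \<T>"
  unfolding mesh_domain_def by (intro interior_mono) (auto intro: closure_subset[THEN subsetD])

lemma sum_interiors: "(\<Sum>T\<in>\<T>. integral (interior T) (grad_sq v)) \<le> grad_L2sq \<T> v"
proof -
  have "(grad_sq v has_integral (\<Sum>T\<in>\<T>. integral (interior T) (grad_sq v))) (\<Union>T\<in>\<T>. interior T)"
  proof (rule has_integral_UN[OF fin])
    fix T assume "T \<in> \<T>"
    then show "(grad_sq v has_integral integral (interior T) (grad_sq v)) (interior T)"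
      using int_sub interior_in_mesh by (simp add: integrable_integral)
  next
    show "pairwise (\<lambda>i i'. negligible (interior i \<inter> interior i')) \<T>"
      unfolding pairwise_def using disj by simp
  qed
  then have i1: "integral (\<Union>T\<in>\<T>. interior T) (grad_sq v) = (\<Sum>T\<in>\<T>. integral (interior T) (grad_sq v))"
    and i2: "grad_sq v integrable_on (\<Union>T\<in>\<T>. interior T)"
    by (auto simp: integral_unique has_integral_integrable)
  have "integral (\<Union>T\<in>\<T>. interior T) (grad_sq v) \<le> integral (mesh_domain \<T>) (grad_sq v)"
    using interior_in_mesh i2 g_int grad_sq_nonneg
    by (intro integral_subset_le) (auto simp: absolutely_integrable_on_def)
  then show ?thesis unfolding grad_L2sq_def i1 .
qed

end



lemma ball_const_int: "integral (ball (c::pt) r) (\<lambda>x. k) = k * (r\<^sup>2 * pi)" if "0 \<le> r"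
proof -
  have m: "integral (ball c r) (\<lambda>x. 1::real) = Henstock_Kurzweil_Integration.content (ball c r)"
    using lmeasure_integral[OF lmeasurable_ball[of c r]] by simp
  have "integral (ball c r) (\<lambda>x. k) = integral (ball c r) (\<lambda>x. k *\<^sub>R (1::real))" by simp
  also have "\<dots> = k * integral (ball c r) (\<lambda>x. 1::real)" by (simp only: integral_cmul) simp
  also have "\<dots> = k * Henstock_Kurzweil_Integration.content (ball c r)" by (simp only: m)
  also have "Henstock_Kurzweil_Integration.content (ball c r) = r\<^sup>2 * pi" using that by (rule circle_area)
  finally show ?thesis .
qed



lemma Sh_formula:
  assumes "piece v (adj_elem \<T> e) = polyf q0 q1 q2 q3 q4 q5" "v x = polyf q0 q1 q2 q3 q4 q5 x"
  shows "Sh M \<T> v e x = polyf q0 q1 q2 q3 q4 q5 x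
     + (M x - x)$1 *\<^sub>R fst (GD q1 q2 q3 q4 q5 x) + (M x - x)$2 *\<^sub>R snd (GD q1 q2 q3 q4 q5 x)
     + (1/2) *\<^sub>R ((M x - x)$1 *\<^sub>R ((2*(M x - x)$1) *\<^sub>R q3 + (M x - x)$2 *\<^sub>R q4)
                 + (M x - x)$2 *\<^sub>R ((M x - x)$1 *\<^sub>R q4 + (2*(M x - x)$2) *\<^sub>R q5))"
proof -
  define m where "m = M x - x"
  show ?thesis
  proof (cases "norm m = 0")
    case True
    then have "m = 0" by simp
    then show ?thesis unfolding Sh_def Let_def assms m_def[symmetric] dirder_P2 dirder2_P2 by simp
  next
    case False
    then show ?thesis unfolding Sh_def Let_def assms m_def[symmetric] dirder_P2 dirder2_P2 GD_def
      by (simp add: vec_eq_iff field_simps power2_eq_square)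
  qed
qed

lemma sq_tri: "(norm (a + b :: pt))\<^sup>2 \<le> 2 * (norm a)\<^sup>2 + 2 * (norm b)\<^sup>2"
proof -
  have "(norm (a + b))\<^sup>2 \<le> (norm a + norm b)\<^sup>2" by (intro power_mono norm_triangle_ineq) simp
  also have "\<dots> \<le> 2 * (norm a)\<^sup>2 + 2 * (norm b)\<^sup>2"
    using sum_squares_bound[of "norm a" "norm b"] by (simp add: power2_eq_square algebra_simps)
  finally show ?thesis .
qed

lemma div_helper:
  fixes X Y d B :: real
  assumes "0 < d" "X \<le> 2 * Y + d * B"
  shows "X / d \<le> 2 * (Y / d) + B"
proof -
  have "X / d \<le> (2 * Y + d * B) / d" using assms by (intro divide_right_mono) auto
  also have "\<dots> = 2 * (Y / d) + B" using assms(1) by (simp add: add_divide_distrib)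
  finally show ?thesis .
qed

lemma continuous_polyf: "continuous_on S (polyf c0 c1 c2 c3 c4 c5)"
  unfolding polyf_def by (intro continuous_intros)

definition AAf :: "real \<Rightarrow> real" where "AAf \<kappa> = 2304 * \<kappa>\<^sup>2 / pi"
definition kkf :: "real \<Rightarrow> real" where "kkf \<kappa> = (1 + 3*\<kappa>)\<^sup>2"

locale edgeloc = meshloc +
  fixes \<kappa> c :: real and Mp :: "pt \<Rightarrow> pt"
  assumes kappa: "1 \<le> \<kappa>" and cc: "0 \<le> c" "c \<le> 1"
   and shape: "\<And>T. T \<in> \<T> \<Longrightarrow> \<exists>x. ball x (diameter T / \<kappa>) \<subseteq> T"
   and Mb: "\<And>e x. e \<in> bdry_edges \<T> \<Longrightarrow> x \<in> e \<Longrightarrow> norm (Mp x - x) \<le> c * diameter e"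
   and Mc: "continuous_on (frontier (mesh_domain \<T>)) Mp"
begin


lemma edge_main:
  assumes eB: "e \<in> bdry_edges \<T>"
  defines "T \<equiv> elem_of_edge \<T> e"
  defines "I \<equiv> integral (interior T) (grad_sq v)"
  shows "T \<in> \<T>" "e \<in> edges T" "0 < diameter e" "0 \<le> I"
    "edge_L2sq e (\<lambda>x. Sh Mp \<T> v e x - v x) / diameter e \<le> c * (kkf \<kappa>) * (AAf \<kappa>) * I"
    "edge_L2sq e (Sh Mp \<T> v e) / diameter e \<le> 2 * (edge_L2sq e v / diameter e) + 2 * (c * (kkf \<kappa>) * (AAf \<kappa>) * I)"
    "edge_L2sq e v / diameter e \<le> 2 * (edge_L2sq e (Sh Mp \<T> v e) / diameter e) + 2 * (c * (kkf \<kappa>) * (AAf \<kappa>) * I)"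
    "diameter e * edge_integral e (grad_sq (piece v (adj_elem \<T> e))) \<le> (AAf \<kappa>) * I"
    "0 \<le> edge_L2sq e v" "0 \<le> edge_L2sq e (Sh Mp \<T> v e)"
    "0 \<le> edge_integral e (grad_sq (piece v (adj_elem \<T> e)))"
proof -
  obtain T0 where T0: "T0 \<in> \<T>" "e \<in> edges T0" and efr: "e \<subseteq> frontier (mesh_domain \<T>)"
    using eB unfolding bdry_edges_def by blast
  have TT: "T \<in> \<T> \<and> e \<in> edges T"
    unfolding T_def elem_of_edge_def by (rule someI_ex) (use T0 in blast)
  then show T: "T \<in> \<T>" and eT: "e \<in> edges T" by auto
  obtain a1 a2 a3 where Tc: "T = convex hull {a1,a2,a3}" and bary: "barycenter T = (1/3) *\<^sub>R (a1+a2+a3)"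
    and e: "e = closed_segment a1 a2" and a12: "a1 \<noteq> a2"
    using edge_tri[OF tri[OF T] eT] by metis
  define b where "b = (1/3) *\<^sub>R (a1+a2+a3)"
  define K where "K = adj_elem \<T> e"
  have K1: "K = convex hull (insert (barycenter T) e)"
    unfolding K_def adj_elem_def T_def ..
  have Kc: "K = convex hull {b, a1, a2}"
    unfolding K1 bary b_def e segment_convex_hull hull_insert_hull ..
  have Kct: "K \<in> ct_mesh \<T>"
    unfolding ct_mesh_def ct_split_def K1 using T eT by blast
  have convK: "convex K" and compK: "compact K"
    unfolding Kc by (auto intro: convex_convex_hull finite_imp_compact_convex_hull)
  have "\<exists>p. p \<in> P2 \<and> (\<forall>x\<in>K. v x = p x)" using vV Kct unfolding Vh_def by blast
  then have pc: "piece v K \<in> P2 \<and> (\<forall>x\<in>K. v x = piece v K x)"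
    unfolding piece_def by (rule someI_ex)
  obtain q0 q1 q2 q3 q4 q5 where pq: "piece v K = polyf q0 q1 q2 q3 q4 q5"
    using P2_polyf pc by blast
  have vK: "\<forall>x\<in>K. v x = polyf q0 q1 q2 q3 q4 q5 x" using pc pq by simp
  have convT: "convex T" and compT: "compact T" using tri_convex_compact tri T by auto
  define D where "D = diameter T"
  have a12T: "a1 \<in> T" "a2 \<in> T" unfolding Tc by (auto intro: hull_inc)
  have de: "diameter e = dist a1 a2" unfolding e by (rule diameter_seg)
  have deD: "diameter e \<le> D"
    unfolding de D_def by (rule diameter_bounded_bound[OF compact_imp_bounded[OF compT] a12T])
  show dpos: "0 < diameter e" unfolding de using a12 by simp
  have Dpos: "0 < D" using dpos deD by linarith
  have kpos: "0 < \<kappa>" using kappa by simp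
  obtain x0 where x0: "ball x0 (D / \<kappa>) \<subseteq> T" using shape[OF T] unfolding D_def by blast
  have sb: "ball ((1/3) *\<^sub>R (x0 + a1 + a2)) (D / \<kappa> / 3) \<subseteq> K"
    unfolding Kc b_def using sub_ball[of x0 "D/\<kappa>" a1 a2 a3] x0 Tc by simp
  define r where "r = D / (6 * \<kappa>)"
  have rpos: "0 < r" unfolding r_def using Dpos kpos by simp
  have "cball ((1/3) *\<^sub>R (x0 + a1 + a2)) r \<subseteq> ball ((1/3) *\<^sub>R (x0 + a1 + a2)) (D / \<kappa> / 3)"
    unfolding r_def cball_subset_ball_iff using Dpos kpos by (simp add: field_simps)
  with sb have cb: "cball ((1/3) *\<^sub>R (x0 + a1 + a2)) r \<subseteq> K" by blast
  obtain Mg w' where M0: "0 \<le> Mg" and Mbnd: "\<forall>x\<in>K. norm (GD q1 q2 q3 q4 q5 x) \<le> Mg"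
    and d1: "\<And>d x. norm d \<le> 1 \<Longrightarrow> x \<in> K \<Longrightarrow> norm (dirder (polyf q0 q1 q2 q3 q4 q5) d x) \<le> Mg"
    and d2: "\<And>d x. norm d \<le> 1 \<Longrightarrow> norm (dirder (dirder (polyf q0 q1 q2 q3 q4 q5) d) d x) \<le> Mg / r"
    and bK: "ball w' (r/4) \<subseteq> K"
    and low: "\<And>y. y \<in> ball w' (r/4) \<Longrightarrow> Mg\<^sup>2 / 4 \<le> grad_sq (polyf q0 q1 q2 q3 q4 q5) y"
    using local_bounds[OF convK compK cb rpos] by metis
  have a12K: "a1 \<in> K" "a2 \<in> K" unfolding Kc by (auto intro: hull_inc)
  have eK: "e \<subseteq> K" unfolding e by (rule closed_segment_subset[OF a12K convK])
  have bT: "b \<in> T" unfolding Tc b_def convex_hull_3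
    by (rule CollectI, rule exI[of _ "1/3"], rule exI[of _ "1/3"], rule exI[of _ "1/3"]) (simp add: scaleR_add_right)
  have KT: "K \<subseteq> T" unfolding Kc using bT a12T convT by (intro hull_minimal) auto
  have bI: "ball w' (r/4) \<subseteq> interior T" using bK KT by (intro interior_maximal) auto
  have bIK: "ball w' (r/4) \<subseteq> interior K" using bK by (intro interior_maximal) auto
  have intT: "grad_sq v integrable_on interior T" using interior_in_mesh[OF T] by (intro int_sub) auto
  have intB: "grad_sq v integrable_on ball w' (r/4)" using bI interior_in_mesh[OF T] by (intro int_sub) auto
  show I0: "0 \<le> I" unfolding I_def by (rule integral_nonneg[OF intT]) (simp add: grad_sq_nonneg)
  have lowI: "Mg\<^sup>2 / 4 * ((r/4)\<^sup>2 * pi) \<le> I"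
  proof -
    have "Mg\<^sup>2 / 4 * ((r/4)\<^sup>2 * pi) = integral (ball w' (r/4)) (\<lambda>x. Mg\<^sup>2 / 4)"
      using rpos by (simp add: ball_const_int)
    also have "\<dots> \<le> integral (ball w' (r/4)) (grad_sq v)"
    proof (rule integral_le)
      show "(\<lambda>x. Mg\<^sup>2 / 4) integrable_on ball w' (r/4)" by (rule integrable_on_const) simp
      show "grad_sq v integrable_on ball w' (r/4)" by (rule intB)
      fix y assume y: "y \<in> ball w' (r/4)"
      have "grad_sq v y = grad_sq (polyf q0 q1 q2 q3 q4 q5) y"
        using y bIK by (intro grad_sq_interior[OF vK]) auto
      then show "Mg\<^sup>2 / 4 \<le> grad_sq v y" using low[OF y] by simp
    qed
    also have "\<dots> \<le> I" unfolding I_def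
      using bI intB intT by (intro integral_subset_le) (auto simp: grad_sq_nonneg)
    finally show ?thesis .
  qed
  have DM: "D\<^sup>2 * Mg\<^sup>2 \<le> (AAf \<kappa>) * I"
  proof -
    have "D\<^sup>2 * Mg\<^sup>2 = (AAf \<kappa>) * (Mg\<^sup>2 / 4 * ((r/4)\<^sup>2 * pi))"
      unfolding AAf_def r_def using kpos by (simp add: field_simps power2_eq_square)
    also have "\<dots> \<le> (AAf \<kappa>) * I" using lowI unfolding AAf_def by (intro mult_left_mono) auto
    finally show ?thesis .
  qed
  define p where "p = polyf q0 q1 q2 q3 q4 q5"
  define B where "B = c * (kkf \<kappa>) * (D\<^sup>2 * Mg\<^sup>2)"
  have kk0: "0 \<le> (kkf \<kappa>)" unfolding kkf_def by simp
  have B0: "0 \<le> B" unfolding B_def using cc kk0 by simp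
  have BI: "B \<le> c * (kkf \<kappa>) * (AAf \<kappa>) * I"
    unfolding B_def using DM cc kk0 by (simp add: mult.assoc mult_left_mono)
  have ptw: "(norm (Sh Mp \<T> v e x - v x))\<^sup>2 \<le> B" if x: "x \<in> e" for x
  proof -
    define m where "m = Mp x - x"
    define \<delta> where "\<delta> = norm m"
    define d where "d = m /\<^sub>R \<delta>"
    have dl: "norm d \<le> 1" unfolding d_def \<delta>_def by (cases "norm m = 0") auto
    have \<delta>0: "0 \<le> \<delta>" unfolding \<delta>_def by simp
    have \<delta>D: "\<delta> \<le> c * D"
    proof -
      have "\<delta> \<le> c * diameter e" unfolding \<delta>_def m_def by (rule Mb[OF eB x])
      also have "\<dots> \<le> c * D" using deD cc by (intro mult_left_mono) auto
      finally show ?thesis .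
    qed
    have Sx: "Sh Mp \<T> v e x - v x = \<delta> *\<^sub>R dirder p d x + (\<delta>\<^sup>2 / 2) *\<^sub>R dirder (dirder p d) d x"
      unfolding Sh_def Let_def K_def[symmetric] pq p_def \<delta>_def d_def m_def by simp
    have "norm (Sh Mp \<T> v e x - v x) \<le> \<delta> * Mg + (\<delta>\<^sup>2 / 2) * (Mg / r)"
    proof -
      have "norm (Sh Mp \<T> v e x - v x) \<le> norm (\<delta> *\<^sub>R dirder p d x) + norm ((\<delta>\<^sup>2 / 2) *\<^sub>R dirder (dirder p d) d x)"
        unfolding Sx by (rule norm_triangle_ineq)
      also have "\<dots> = \<delta> * norm (dirder p d x) + (\<delta>\<^sup>2 / 2) * norm (dirder (dirder p d) d x)"
        using \<delta>0 by simp
      also have "\<dots> \<le> \<delta> * Mg + (\<delta>\<^sup>2 / 2) * (Mg / r)"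
        unfolding p_def using d1[OF dl subsetD[OF eK x]] d2[OF dl] \<delta>0
        by (intro add_mono mult_left_mono) auto
      finally show ?thesis .
    qed
    also have "\<dots> \<le> c * (1 + 3*\<kappa>) * D * Mg"
    proof -
      have "(\<delta>\<^sup>2 / 2) * (Mg / r) = \<delta>\<^sup>2 * (3 * \<kappa> * Mg / D)"
        unfolding r_def using Dpos kpos by (simp add: field_simps)
      also have "\<dots> \<le> (c * D)\<^sup>2 * (3 * \<kappa> * Mg / D)"
        using \<delta>D \<delta>0 kpos M0 Dpos by (intro mult_right_mono power_mono) auto
      also have "\<dots> = c * c * (3 * \<kappa> * D * Mg)" using Dpos by (simp add: field_simps power2_eq_square)
      also have "\<dots> \<le> c * 1 * (3 * \<kappa> * D * Mg)"
        using cc kpos Dpos M0 by (intro mult_right_mono mult_left_mono) auto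
      finally have t2: "(\<delta>\<^sup>2 / 2) * (Mg / r) \<le> c * (3 * \<kappa> * D * Mg)" by simp
      have t1: "\<delta> * Mg \<le> c * D * Mg" using \<delta>D M0 by (intro mult_right_mono) auto
      from t1 t2 show ?thesis by (simp add: algebra_simps)
    qed
    finally have nb: "norm (Sh Mp \<T> v e x - v x) \<le> c * (1 + 3*\<kappa>) * D * Mg" .
    have "(norm (Sh Mp \<T> v e x - v x))\<^sup>2 \<le> (c * (1 + 3*\<kappa>) * D * Mg)\<^sup>2"
      using nb by (intro power_mono) auto
    also have "\<dots> = (c * c) * (kkf \<kappa>) * (D\<^sup>2 * Mg\<^sup>2)" unfolding kkf_def by (simp add: power2_eq_square)
    also have "\<dots> \<le> (c * 1) * (kkf \<kappa>) * (D\<^sup>2 * Mg\<^sup>2)"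
      using cc kk0 by (intro mult_right_mono mult_left_mono) auto
    finally show ?thesis unfolding B_def by simp
  qed
  have de2: "diameter e = dist a1 a2" by (rule de)
  have dd: "0 < dist a1 a2" using a12 by simp
  have gam: "a1 + t *\<^sub>R (a2 - a1) \<in> e" if "t \<in> {0..1}" for t
    unfolding e using seg_param[OF that] .
  show "edge_L2sq e (\<lambda>x. Sh Mp \<T> v e x - v x) / diameter e \<le> c * (kkf \<kappa>) * (AAf \<kappa>) * I"
  proof -
    have "edge_L2sq e (\<lambda>x. Sh Mp \<T> v e x - v x) \<le> dist a1 a2 * B"
      unfolding edge_L2sq_def using ptw B0 unfolding e by (intro EI_le_const[OF a12]) auto
    then have "edge_L2sq e (\<lambda>x. Sh Mp \<T> v e x - v x) / diameter e \<le> B"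
      unfolding de2 using dd by (simp add: divide_le_eq mult.commute)
    then show ?thesis using BI by linarith
  qed
  have vp: "v x = p x" if "x \<in> e" for x using vK eK that unfolding p_def by blast
  have intv: "(\<lambda>t. (norm (v (a1 + t *\<^sub>R (a2 - a1))))\<^sup>2) integrable_on {0..1}"
  proof (rule integrable_eq)
    show "(\<lambda>t. (norm (p (a1 + t *\<^sub>R (a2 - a1))))\<^sup>2) integrable_on {0..1}"
      unfolding p_def
      by (intro integrable_continuous_real continuous_intros continuous_on_compose2[OF continuous_polyf[of UNIV]]) auto
    fix t :: real assume "t \<in> {0..1}"
    then show "(norm (p (a1 + t *\<^sub>R (a2 - a1))))\<^sup>2 = (norm (v (a1 + t *\<^sub>R (a2 - a1))))\<^sup>2"
      using vp gam by simp
  qed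
  have intS: "(\<lambda>t. (norm (Sh Mp \<T> v e (a1 + t *\<^sub>R (a2 - a1))))\<^sup>2) integrable_on {0..1}"
  proof (rule integrable_eq)
    let ?m = "\<lambda>t. Mp (a1 + t *\<^sub>R (a2 - a1)) - (a1 + t *\<^sub>R (a2 - a1))"
    let ?y = "\<lambda>t. a1 + t *\<^sub>R (a2 - a1)"
    let ?F = "\<lambda>t. p (?y t)
     + (?m t)$1 *\<^sub>R fst (GD q1 q2 q3 q4 q5 (?y t)) + (?m t)$2 *\<^sub>R snd (GD q1 q2 q3 q4 q5 (?y t))
     + (1/2) *\<^sub>R ((?m t)$1 *\<^sub>R ((2*(?m t)$1) *\<^sub>R q3 + (?m t)$2 *\<^sub>R q4)
                 + (?m t)$2 *\<^sub>R ((?m t)$1 *\<^sub>R q4 + (2*(?m t)$2) *\<^sub>R q5))"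
    have cy: "continuous_on {0..1::real} ?y" by (intro continuous_intros)
    have cM: "continuous_on {0..1} (\<lambda>t. Mp (?y t))"
      using gam efr by (intro continuous_on_compose2[OF Mc cy]) auto
    have cp: "continuous_on {0..1} (\<lambda>t. p (?y t))"
      unfolding p_def by (intro continuous_on_compose2[OF continuous_polyf[of UNIV] cy]) auto
    have cG: "continuous_on {0..1} (\<lambda>t. GD q1 q2 q3 q4 q5 (?y t))"
      by (intro continuous_on_compose2[OF continuous_GD[of UNIV] cy]) auto
    have cm: "continuous_on {0..1} ?m" using cM cy by (intro continuous_intros)
    have cmi: "continuous_on {0..1} (\<lambda>t. ?m t $ i)" for i
      using cM cy by (intro continuous_intros)
    show "(\<lambda>t. (norm (?F t))\<^sup>2) integrable_on {0..1}"
      using cp cG cmi cM by (intro integrable_continuous_real continuous_intros) auto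
    fix t :: real assume t: "t \<in> {0..1}"
    have "Sh Mp \<T> v e (?y t) = ?F t"
      unfolding p_def by (rule Sh_formula) (use pq vp gam[OF t] in \<open>auto simp: K_def p_def\<close>)
    then show "(norm (?F t))\<^sup>2 = (norm (Sh Mp \<T> v e (?y t)))\<^sup>2" by simp
  qed
  have Shsplit: "Sh Mp \<T> v e x = v x + (Sh Mp \<T> v e x - v x)" for x by simp
  show "edge_L2sq e (Sh Mp \<T> v e) / diameter e \<le> 2 * (edge_L2sq e v / diameter e) + 2 * (c * (kkf \<kappa>) * (AAf \<kappa>) * I)"
  proof -
    have pt: "(norm (Sh Mp \<T> v e x))\<^sup>2 \<le> 2 * (norm (v x))\<^sup>2 + 2 * B" if "x \<in> e" for x
    proof -
      have "(norm (Sh Mp \<T> v e x))\<^sup>2 \<le> 2 * (norm (v x))\<^sup>2 + 2 * (norm (Sh Mp \<T> v e x - v x))\<^sup>2"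
        using sq_tri[of "v x" "Sh Mp \<T> v e x - v x"] by simp
      then show ?thesis using ptw[OF that] by linarith
    qed
    have "edge_L2sq e (Sh Mp \<T> v e) \<le> 2 * edge_L2sq e v + dist a1 a2 * (2 * B)"
      unfolding edge_L2sq_def e using pt B0 intv unfolding e
      by (intro EI_bound2[OF a12]) auto
    then have "edge_L2sq e (Sh Mp \<T> v e) / diameter e \<le> 2 * (edge_L2sq e v / diameter e) + 2 * B"
      unfolding de2 using dd by (intro div_helper) auto
    then show ?thesis using BI by linarith
  qed
  show "edge_L2sq e v / diameter e \<le> 2 * (edge_L2sq e (Sh Mp \<T> v e) / diameter e) + 2 * (c * (kkf \<kappa>) * (AAf \<kappa>) * I)"
  proof -
    have pt: "(norm (v x))\<^sup>2 \<le> 2 * (norm (Sh Mp \<T> v e x))\<^sup>2 + 2 * B" if "x \<in> e" for x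
    proof -
      have "(norm (v x))\<^sup>2 \<le> 2 * (norm (Sh Mp \<T> v e x))\<^sup>2 + 2 * (norm (v x - Sh Mp \<T> v e x))\<^sup>2"
        using sq_tri[of "Sh Mp \<T> v e x" "v x - Sh Mp \<T> v e x"] by simp
      moreover have "norm (v x - Sh Mp \<T> v e x) = norm (Sh Mp \<T> v e x - v x)" by (rule norm_minus_commute)
      ultimately show ?thesis using ptw[OF that] by simp
    qed
    have "edge_L2sq e v \<le> 2 * edge_L2sq e (Sh Mp \<T> v e) + dist a1 a2 * (2 * B)"
      unfolding edge_L2sq_def e using pt B0 intS unfolding e
      by (intro EI_bound2[OF a12]) auto
    then have "edge_L2sq e v / diameter e \<le> 2 * (edge_L2sq e (Sh Mp \<T> v e) / diameter e) + 2 * B"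
      unfolding de2 using dd by (intro div_helper) auto
    then show ?thesis using BI by linarith
  qed
  have gp: "grad_sq (piece v (adj_elem \<T> e)) = grad_sq p" unfolding K_def[symmetric] pq p_def ..
  show "diameter e * edge_integral e (grad_sq (piece v (adj_elem \<T> e))) \<le> (AAf \<kappa>) * I"
  proof -
    have pt: "grad_sq p x \<le> Mg\<^sup>2" if "x \<in> e" for x
    proof -
      have "norm (GD q1 q2 q3 q4 q5 x) \<le> Mg" using Mbnd eK that by blast
      then have "(norm (GD q1 q2 q3 q4 q5 x))\<^sup>2 \<le> Mg\<^sup>2" by (intro power_mono) auto
      then show ?thesis unfolding p_def grad_sq_P2 .
    qed
    have "edge_integral e (grad_sq p) \<le> dist a1 a2 * Mg\<^sup>2"
      using pt unfolding e by (intro EI_le_const[OF a12]) auto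
    then have "diameter e * edge_integral e (grad_sq p) \<le> dist a1 a2 * (dist a1 a2 * Mg\<^sup>2)"
      unfolding de2 using dd by (intro mult_left_mono) auto
    also have "\<dots> = (dist a1 a2)\<^sup>2 * Mg\<^sup>2" by (simp add: power2_eq_square)
    also have "\<dots> \<le> D\<^sup>2 * Mg\<^sup>2" using deD de2 dd by (intro mult_right_mono power_mono) auto
    also have "\<dots> \<le> (AAf \<kappa>) * I" by (rule DM)
    finally show ?thesis unfolding gp .
  qed
  show "0 \<le> edge_L2sq e v" "0 \<le> edge_L2sq e (Sh Mp \<T> v e)"
    unfolding edge_L2sq_def e by (intro EI_nonneg[OF a12]; simp)+
  show "0 \<le> edge_integral e (grad_sq (piece v (adj_elem \<T> e)))"
    unfolding e by (intro EI_nonneg[OF a12]) (simp add: grad_sq_nonneg)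
qed

end




context edgeloc begin

lemma bdry_finite: "finite (bdry_edges \<T>)"
proof -
  have "bdry_edges \<T> \<subseteq> (\<Union>T\<in>\<T>. edges T)" unfolding bdry_edges_def by blast
  moreover have "finite (\<Union>T\<in>\<T>. edges T)" using fin edges_finite(1)[OF tri] by blast
  ultimately show ?thesis by (rule finite_subset)
qed

definition "II T = integral (interior T) (grad_sq v)"

lemma II_nonneg: "T \<in> \<T> \<Longrightarrow> 0 \<le> II T"
  unfolding II_def using int_sub interior_in_mesh
  by (intro integral_nonneg) (auto simp: grad_sq_nonneg)

lemma sum_group:
  "(\<Sum>e\<in>bdry_edges \<T>. II (elem_of_edge \<T> e)) \<le> 9 * grad_L2sq \<T> v"
proof -
  let ?E = "bdry_edges \<T>" and ?t = "elem_of_edge \<T>"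
  have tin: "?t e \<in> \<T>" "e \<in> edges (?t e)" if "e \<in> ?E" for e
    using edge_main(1,2)[OF that] by auto
  have "(\<Sum>e\<in>?E. II (?t e)) = (\<Sum>T\<in>?t ` ?E. (\<Sum>e\<in>{e\<in>?E. ?t e = T}. II (?t e)))"
    by (rule sum.image_gen[OF bdry_finite])
  also have "\<dots> = (\<Sum>T\<in>?t ` ?E. of_nat (card {e\<in>?E. ?t e = T}) * II T)"
    by (intro sum.cong refl) simp
  also have "\<dots> \<le> (\<Sum>T\<in>?t ` ?E. 9 * II T)"
  proof (intro sum_mono mult_right_mono)
    fix T assume T: "T \<in> ?t ` ?E"
    then have TT: "T \<in> \<T>" using tin by blast
    have "{e\<in>?E. ?t e = T} \<subseteq> edges T" using tin by blast
    then have "card {e\<in>?E. ?t e = T} \<le> card (edges T)"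
      using edges_finite(1)[OF tri[OF TT]] by (rule card_mono[rotated])
    also have "\<dots> \<le> 9" using edges_finite(2)[OF tri[OF TT]] .
    finally show "real (card {e\<in>?E. ?t e = T}) \<le> 9" by simp
    show "0 \<le> II T" using II_nonneg TT .
  qed
  also have "\<dots> \<le> (\<Sum>T\<in>\<T>. 9 * II T)"
    using tin II_nonneg fin by (intro sum_mono2) auto
  also have "\<dots> = 9 * (\<Sum>T\<in>\<T>. II T)" by (simp add: sum_distrib_left)
  also have "\<dots> \<le> 9 * grad_L2sq \<T> v" using sum_interiors unfolding II_def by simp
  finally show ?thesis .
qed

lemma final_bounds:
  defines "C \<equiv> 2 + 18 * kkf \<kappa> * AAf \<kappa> + 9 * AAf \<kappa>"
  shows "(\<Sum>e\<in>bdry_edges \<T>. edge_L2sq e (\<lambda>x. Sh Mp \<T> v e x - v x) / diameter e) \<le> C * c * grad_L2sq \<T> v"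
    "(\<Sum>e\<in>bdry_edges \<T>. edge_L2sq e (Sh Mp \<T> v e) / diameter e) \<le> C * norm_1h_sq \<T> v"
    "norm_h_sq Mp \<T> v \<le> C * norm_1h_sq \<T> v"
    "norm_1h_sq \<T> v \<le> C * norm_h_sq Mp \<T> v"
    "triple_sq Mp \<T> v \<le> C * norm_h_sq Mp \<T> v"
    "norm_h_sq Mp \<T> v \<le> C * triple_sq Mp \<T> v"
proof -
  let ?E = "bdry_edges \<T>" and ?t = "elem_of_edge \<T>"
  let ?G = "grad_L2sq \<T> v"
  let ?SI = "\<Sum>e\<in>?E. II (?t e)"
  let ?X = "kkf \<kappa> * AAf \<kappa>"
  let ?D = "\<Sum>e\<in>?E. edge_L2sq e (\<lambda>x. Sh Mp \<T> v e x - v x) / diameter e"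
  let ?S = "\<Sum>e\<in>?E. edge_L2sq e (Sh Mp \<T> v e) / diameter e"
  let ?V = "\<Sum>e\<in>?E. edge_L2sq e v / diameter e"
  let ?R = "\<Sum>e\<in>?E. diameter e * edge_integral e (grad_sq (piece v (adj_elem \<T> e)))"
  have A0: "0 \<le> AAf \<kappa>" unfolding AAf_def by simp
  have k0: "0 \<le> kkf \<kappa>" unfolding kkf_def by simp
  have X0: "0 \<le> ?X" using A0 k0 by simp
  have G0: "0 \<le> ?G" unfolding grad_L2sq_def
    using g_int by (intro integral_nonneg) (auto simp: grad_sq_nonneg absolutely_integrable_on_def)
  have SI: "?SI \<le> 9 * ?G" by (rule sum_group)
  have SI0: "0 \<le> ?SI" using II_nonneg edge_main(1) by (intro sum_nonneg) auto
  have S0: "0 \<le> ?S" by (intro sum_nonneg divide_nonneg_nonneg edge_main(10) less_imp_le[OF edge_main(3)])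
  have V0: "0 \<le> ?V" by (intro sum_nonneg divide_nonneg_nonneg edge_main(9) less_imp_le[OF edge_main(3)])
  have R0: "0 \<le> ?R" by (intro sum_nonneg mult_nonneg_nonneg edge_main(11) less_imp_le[OF edge_main(3)])
  have "?D \<le> (\<Sum>e\<in>?E. c * ?X * II (?t e))"
    using edge_main(5) unfolding II_def by (intro sum_mono) (simp add: mult.assoc)
  also have "\<dots> = c * ?X * ?SI" by (simp add: sum_distrib_left)
  finally have D1: "?D \<le> c * ?X * ?SI" .
  have "?S \<le> (\<Sum>e\<in>?E. 2 * (edge_L2sq e v / diameter e) + 2 * (c * ?X * II (?t e)))"
    using edge_main(6) unfolding II_def by (intro sum_mono) (simp add: mult.assoc)
  also have "\<dots> = 2 * ?V + 2 * (c * ?X * ?SI)" by (simp add: sum.distrib sum_distrib_left)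
  finally have S1: "?S \<le> 2 * ?V + 2 * (c * ?X * ?SI)" .
  have "?V \<le> (\<Sum>e\<in>?E. 2 * (edge_L2sq e (Sh Mp \<T> v e) / diameter e) + 2 * (c * ?X * II (?t e)))"
    using edge_main(7) unfolding II_def by (intro sum_mono) (simp add: mult.assoc)
  also have "\<dots> = 2 * ?S + 2 * (c * ?X * ?SI)" by (simp add: sum.distrib sum_distrib_left)
  finally have V1: "?V \<le> 2 * ?S + 2 * (c * ?X * ?SI)" .
  have "?R \<le> (\<Sum>e\<in>?E. AAf \<kappa> * II (?t e))"
    using edge_main(8) unfolding II_def by (intro sum_mono) simp
  also have "\<dots> = AAf \<kappa> * ?SI" by (simp add: sum_distrib_left)
  finally have R1: "?R \<le> AAf \<kappa> * ?SI" .
  have cXSI: "c * ?X * ?SI \<le> 9 * ?X * ?G"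
  proof -
    have "c * ?X * ?SI \<le> 1 * ?X * ?SI" using cc X0 SI0 by (intro mult_right_mono) auto
    also have "\<dots> \<le> ?X * (9 * ?G)" using mult_left_mono[OF SI X0] by simp
    finally show ?thesis by simp
  qed
  have cXSI': "c * ?X * ?SI \<le> c * (9 * ?X * ?G)"
  proof -
    have "c * ?X * ?SI = c * (?X * ?SI)" by simp
    also have "\<dots> \<le> c * (?X * (9 * ?G))" using SI X0 cc by (intro mult_left_mono) auto
    finally show ?thesis by simp
  qed
  have ASI: "AAf \<kappa> * ?SI \<le> 9 * AAf \<kappa> * ?G"
  proof -
    have "AAf \<kappa> * ?SI \<le> AAf \<kappa> * (9 * ?G)" using SI A0 by (rule mult_left_mono)
    then show ?thesis by (simp add: mult_ac)
  qed
  have XG0: "0 \<le> ?X * ?G" using X0 G0 by simp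
  have AG0: "0 \<le> AAf \<kappa> * ?G" using A0 G0 by simp
  have n1: "norm_1h_sq \<T> v = ?G + ?V" unfolding norm_1h_sq_def ..
  have nh: "norm_h_sq Mp \<T> v = ?G + ?S" unfolding norm_h_sq_def ..
  have tr: "triple_sq Mp \<T> v = norm_h_sq Mp \<T> v + ?R" unfolding triple_sq_def ..
  show "?D \<le> C * c * ?G"
  proof -
    have "?D \<le> c * (9 * ?X * ?G)" using D1 cXSI' by linarith
    also have "\<dots> \<le> c * (C * ?G)" unfolding C_def using cc G0 AG0 XG0
      by (intro mult_left_mono) (auto simp: algebra_simps)
    finally show ?thesis by (simp add: mult_ac)
  qed
  have XV: "0 \<le> ?X * ?V" "0 \<le> AAf \<kappa> * ?V" "0 \<le> ?X * ?S" "0 \<le> AAf \<kappa> * ?S"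
    using X0 A0 V0 S0 by simp_all
  have e1: "C * (?G + ?V) = 2 * ?G + 2 * ?V + 18 * (?X * ?G) + 18 * (?X * ?V) + 9 * (AAf \<kappa> * ?G) + 9 * (AAf \<kappa> * ?V)"
    unfolding C_def by (simp add: algebra_simps)
  have e2: "C * (?G + ?S) = 2 * ?G + 2 * ?S + 18 * (?X * ?G) + 18 * (?X * ?S) + 9 * (AAf \<kappa> * ?G) + 9 * (AAf \<kappa> * ?S)"
    unfolding C_def by (simp add: algebra_simps)
  have e3: "9 * ?X * ?G = 9 * (?X * ?G)" "9 * AAf \<kappa> * ?G = 9 * (AAf \<kappa> * ?G)" by simp_all
  show "?S \<le> C * norm_1h_sq \<T> v" unfolding n1 e1
    using S1 cXSI V0 G0 XG0 AG0 XV e3 by linarith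
  show "norm_h_sq Mp \<T> v \<le> C * norm_1h_sq \<T> v" unfolding n1 nh e1
    using S1 cXSI V0 G0 XG0 AG0 XV e3 by linarith
  show "norm_1h_sq \<T> v \<le> C * norm_h_sq Mp \<T> v" unfolding n1 nh e2
    using V1 cXSI S0 G0 XG0 AG0 XV e3 by linarith
  show "triple_sq Mp \<T> v \<le> C * norm_h_sq Mp \<T> v" unfolding tr nh e2
    using R1 ASI S0 G0 XG0 AG0 XV e3 by linarith
  show "norm_h_sq Mp \<T> v \<le> C * triple_sq Mp \<T> v"
  proof -
    have C1: "1 \<le> C" unfolding C_def using A0 k0 by simp
    have "0 \<le> triple_sq Mp \<T> v" unfolding tr nh using R0 S0 G0 by simp
    then have "triple_sq Mp \<T> v \<le> C * triple_sq Mp \<T> v" using C1 by (simp add: mult_le_cancel_right1)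
    then show ?thesis unfolding tr using R0 by linarith
  qed
qed

end




lemma tri_interior_disj:
  assumes "triangulation \<S> S" "T \<in> \<S>" "T' \<in> \<S>" "T \<noteq> T'"
  shows "interior T \<inter> interior T' = {}"
proof (rule ccontr)
  assume "interior T \<inter> interior T' \<noteq> {}"
  then obtain x where x: "x \<in> interior T" "x \<in> interior T'" by blast
  have f1: "T \<inter> T' face_of T" and f2: "T \<inter> T' face_of T'"
    using assms(1-3) unfolding triangulation_def by blast+
  have xin: "x \<in> T \<inter> T'" using x interior_subset by blast
  have "T \<inter> T' = T"
  proof (rule ccontr)
    assume "T \<inter> T' \<noteq> T"
    then have "x \<in> rel_frontier T" using face_of_subset_rel_frontier[OF f1] xin by blast
    moreover have "x \<in> rel_interior T" using x(1) interior_subset_rel_interior by blast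
    ultimately show False unfolding rel_frontier_def by blast
  qed
  moreover have "T \<inter> T' = T'"
  proof (rule ccontr)
    assume "T \<inter> T' \<noteq> T'"
    then have "x \<in> rel_frontier T'" using face_of_subset_rel_frontier[OF f2] xin by blast
    moreover have "x \<in> rel_interior T'" using x(2) interior_subset_rel_interior by blast
    ultimately show False unfolding rel_frontier_def by blast
  qed
  ultimately show False using assms(4) by blast
qed

theorem lemma4p1:
  fixes \<Omega> :: "pt set" and \<kappa> :: real
  assumes "smooth_bounded_domain \<Omega>" and "1 \<le> \<kappa>"
  shows "\<exists>C>0. \<exists>c0>0. \<forall>S \<S> h M c\<^sub>\<delta> v.
     triangulation \<S> S \<and> \<Omega> \<subseteq> S \<and> shape_reg_quasi_unif \<kappa> h \<S> \<and>
     (\<forall>x\<in>frontier (mesh_domain (interior_mesh \<S> \<Omega>)). M x \<in> frontier \<Omega>) \<and>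
     continuous_on (frontier (mesh_domain (interior_mesh \<S> \<Omega>))) M \<and>
     0 \<le> c\<^sub>\<delta> \<and> c\<^sub>\<delta> < 1 \<and> c\<^sub>\<delta> \<le> c0 \<and>
     (\<forall>e\<in>bdry_edges (interior_mesh \<S> \<Omega>). \<forall>x\<in>e. norm (M x - x) \<le> c\<^sub>\<delta> * diameter e) \<and>
     v \<in> Vh (interior_mesh \<S> \<Omega>)
     \<longrightarrow>
     (let \<T> = interior_mesh \<S> \<Omega> in
       (\<Sum>e\<in>bdry_edges \<T>. edge_L2sq e (\<lambda>x. Sh M \<T> v e x - v x) / diameter e)
          \<le> C * c\<^sub>\<delta> * grad_L2sq \<T> v \<and>
       (\<Sum>e\<in>bdry_edges \<T>. edge_L2sq e (Sh M \<T> v e) / diameter e) \<le> C * norm_1h_sq \<T> v \<and>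
       norm_h_sq M \<T> v \<le> C * norm_1h_sq \<T> v \<and>
       norm_1h_sq \<T> v \<le> C * norm_h_sq M \<T> v \<and>
       triple_sq M \<T> v \<le> C * norm_h_sq M \<T> v \<and>
       norm_h_sq M \<T> v \<le> C * triple_sq M \<T> v)"
proof -
  define C where "C = 2 + 18 * kkf \<kappa> * AAf \<kappa> + 9 * AAf \<kappa>"
  have Cpos: "0 < C" unfolding C_def AAf_def kkf_def by (simp add: add_pos_nonneg)
  show ?thesis
  proof (rule exI[of _ C], rule conjI[OF Cpos], rule exI[of _ "1::real"], rule conjI[OF zero_less_one], intro allI impI)
    fix S \<S> h M c v
    assume H: "triangulation \<S> S \<and> \<Omega> \<subseteq> S \<and> shape_reg_quasi_unif \<kappa> h \<S> \<and>
     (\<forall>x\<in>frontier (mesh_domain (interior_mesh \<S> \<Omega>)). M x \<in> frontier \<Omega>) \<and>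
     continuous_on (frontier (mesh_domain (interior_mesh \<S> \<Omega>))) M \<and>
     0 \<le> c \<and> c < 1 \<and> c \<le> 1 \<and>
     (\<forall>e\<in>bdry_edges (interior_mesh \<S> \<Omega>). \<forall>x\<in>e. norm (M x - x) \<le> c * diameter e) \<and>
     v \<in> Vh (interior_mesh \<S> \<Omega>)"
    define \<T> where "\<T> = interior_mesh \<S> \<Omega>"
    have sub: "\<T> \<subseteq> \<S>" unfolding \<T>_def interior_mesh_def by blast
    have tr: "triangulation \<S> S" using H by blast
    have sr: "shape_reg_quasi_unif \<kappa> h \<S>" using H by blast
    interpret edgeloc \<T> v \<kappa> c M
    proof
      show "finite \<T>" using tr sub unfolding triangulation_def by (blast intro: finite_subset)
      show "\<And>T. T \<in> \<T> \<Longrightarrow> is_triangle T" using tr sub unfolding triangulation_def by blast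
      show "\<And>T T'. T \<in> \<T> \<Longrightarrow> T' \<in> \<T> \<Longrightarrow> T \<noteq> T' \<Longrightarrow> interior T \<inter> interior T' = {}"
        using tri_interior_disj[OF tr] sub by blast
      show "v \<in> Vh \<T>" using H unfolding \<T>_def by blast
      show "1 \<le> \<kappa>" by (rule assms(2))
      show "0 \<le> c" "c \<le> 1" using H by auto
      show "\<And>T. T \<in> \<T> \<Longrightarrow> \<exists>x. ball x (diameter T / \<kappa>) \<subseteq> T"
        using sr sub unfolding shape_reg_quasi_unif_def by blast
      show "\<And>e x. e \<in> bdry_edges \<T> \<Longrightarrow> x \<in> e \<Longrightarrow> norm (M x - x) \<le> c * diameter e"
        using H unfolding \<T>_def by blast
      show "continuous_on (frontier (mesh_domain \<T>)) M" using H unfolding \<T>_def by blast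
    qed
    show "let \<T> = interior_mesh \<S> \<Omega> in
       (\<Sum>e\<in>bdry_edges \<T>. edge_L2sq e (\<lambda>x. Sh M \<T> v e x - v x) / diameter e)
          \<le> C * c * grad_L2sq \<T> v \<and>
       (\<Sum>e\<in>bdry_edges \<T>. edge_L2sq e (Sh M \<T> v e) / diameter e) \<le> C * norm_1h_sq \<T> v \<and>
       norm_h_sq M \<T> v \<le> C * norm_1h_sq \<T> v \<and>
       norm_1h_sq \<T> v \<le> C * norm_h_sq M \<T> v \<and>
       triple_sq M \<T> v \<le> C * norm_h_sq M \<T> v \<and>
       norm_h_sq M \<T> v \<le> C * triple_sq M \<T> v"
      unfolding Let_def \<T>_def[symmetric] C_def using final_bounds by blast
  qed
qed



end
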